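(* Assume $\|\mathbf X\|_{\mathrm{TV}}<C_{\mathbf X}$ and $\|\mathbf z\|<C_{\mathbf z}$ almost surely, and let $r>0$. For any $p\in\mathbb N$, $x>0$ and any fixed $\boldsymbol\theta^0_p\in B_{p,r}$, $$\mathbb P\left(\sup_{\boldsymbol\theta_p\in B_{p,r}}Z_{p,n}(\boldsymbol\theta_p)\ge108Cr\sqrt{\frac{s_d(p)+q}{n}}\sqrt\pi+Z_{p,n}(\boldsymbol\theta^0_p)+x\right)\le36\exp\left(-\frac{x^2n}{144C^2r^2}\right),$$ where $C=2(C_{\mathbf z}+e^{C_{\mathbf X}+T})$ and $Z_{p,n}(\boldsymbol\theta_p)=\widehat{\mathcal R}_{p,n}(\boldsymbol\theta_p)-\mathcal R_p(\boldsymbol\theta_p)$.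
   Context: Let $T>0$, integers $d\ge2$, $q\ge1$. $(\mathbf X,\mathbf z,y)$ is a random triple with $\mathbf X:[0,T]\to\mathbb R^{d-1}$ a continuous bounded-variation path with fixed initial value, $\mathbf z\in\mathbb R^q$, $y\in\{0,1\}$; $\|\mathbf X\|_{\mathrm{TV}}=\sup\sum_i\|\mathbf X_{t_{i+1}}-\mathbf X_{t_i}\|$ over partitions of $[0,T]$. Time augmentation $\widetilde{\mathbf X}(t)=(\mathbf X(t),t)\in\mathbb R^d$; signature terms $S^I(\widetilde{\mathbf X})=\int_{0<t_1<\dots<t_k<T}d\widetilde X^{i_1}_{t_1}\cdots d\widetilde X^{i_k}_{t_k}$ ($I\in\{1,..,d\}^k$, empty $I$ gives 1); truncated signature $S_p(\widetilde{\mathbf X})=(S^I)_{|I|\le p}\in\mathbb R^{s_d(p)}$, $s_d(p)=\sum_{k=0}^pd^k$; $\widetilde{\mathbf S}_p(\widetilde{\mathbf X},\mathbf z)=(S_p(\widetilde{\mathbf X})^\top,\mathbf z^\top)^\top$. Logistic loss $\ell(y,\eta)=-y\eta+\log(1+e^\eta)$; $\mathcal R_p(\boldsymbol\theta_p)=\mathbb E[\ell(y,\widetilde{\mathbf S}_p^\top\boldsymbol\theta_p)]$; $B_{p,r}=\{\boldsymbol\theta\in\mathbb R^{s_d(p)+q}:\|\boldsymbol\theta\|_1\le r\}$. Data $(\mathbf X_i,\mathbf z_i,y_i)_{i=1}^n$ i.i.d. copies; $\widehat{\mathcal R}_{p,n}(\boldsymbol\theta_p)=\frac1n\sum_i\ell(y_i,\widetilde{\mathbf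 S}_p(\widetilde{\mathbf X}_i,\mathbf z_i)^\top\boldsymbol\theta_p)$. *)

theory Defs
  imports "HOL-Probability.Probability"
begin

definition has_RS_integral :: "(real \<Rightarrow> real) \<Rightarrow> (real \<Rightarrow> real) \<Rightarrow> real \<Rightarrow> real \<Rightarrow> real \<Rightarrow> bool" where
  "has_RS_integral f g a b I \<longleftrightarrow>
     (\<forall>\<epsilon>>0. \<exists>\<delta>>0. \<forall>(m::nat) (t::nat \<Rightarrow> real) (s::nat \<Rightarrow> real).
        t 0 = a \<and> t m = b \<and> (\<forall>i<m. t i \<le> s i \<and> s i \<le> t (Suc i) \<and> t (Suc i) - t i < \<delta>)
        \<longrightarrow> \<bar>(\<Sum>i<m. f (s i) * (g (t (Suc i)) - g (t i))) - I\<bar> < \<epsilon>)"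

definition RS_integral :: "(real \<Rightarrow> real) \<Rightarrow> (real \<Rightarrow> real) \<Rightarrow> real \<Rightarrow> real \<Rightarrow> real" where
  "RS_integral f g a b = (THE I. has_RS_integral f g a b I)"

text \<open>Iterated integrals of a path Y (coordinates indexed by nat) on [0,t],
indexed by the REVERSED word: sig_rev Y (i # J) t = int_0^t sig_rev Y J s dY^i_s.\<close>
fun sig_rev :: "(real \<Rightarrow> nat \<Rightarrow> real) \<Rightarrow> nat list \<Rightarrow> real \<Rightarrow> real" where
  "sig_rev Y [] t = 1"
| "sig_rev Y (i # J) t = RS_integral (\<lambda>s. sig_rev Y J s) (\<lambda>s. Y s i) 0 t"

text \<open>Signature term S^I(Y) on [0,T] (coordinates 0-based).\<close>
definition sig_term :: "(real \<Rightarrow> nat \<Rightarrow> real) \<Rightarrow> real \<Rightarrow> nat list \<Rightarrow> real" where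
  "sig_term Y T I = sig_rev Y (rev I) T"

definition time_aug :: "nat \<Rightarrow> (real \<Rightarrow> nat \<Rightarrow> real) \<Rightarrow> real \<Rightarrow> nat \<Rightarrow> real" where
  "time_aug d X t j = (if j < d - 1 then X t j else t)"

definition words :: "nat \<Rightarrow> nat \<Rightarrow> nat list set" where
  "words d p = {I. length I \<le> p \<and> set I \<subseteq> {..<d}}"

definition feat_idx :: "nat \<Rightarrow> nat \<Rightarrow> nat \<Rightarrow> (nat list + nat) set" where
  "feat_idx d p q = Inl ` words d p \<union> Inr ` {..<q}"

definition feature :: "nat \<Rightarrow> real \<Rightarrow> (real \<Rightarrow> nat \<Rightarrow> real) \<Rightarrow> (nat \<Rightarrow> real) \<Rightarrow> nat list + nat \<Rightarrow> real" where
  "feature d T X z v = (case v of Inl I \<Rightarrow> sig_term (time_aug d X) T I | Inr j \<Rightarrow> z j)"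

definition lin_pred :: "nat \<Rightarrow> nat \<Rightarrow> nat \<Rightarrow> real \<Rightarrow> (real \<Rightarrow> nat \<Rightarrow> real) \<Rightarrow> (nat \<Rightarrow> real) \<Rightarrow> (nat list + nat \<Rightarrow> real) \<Rightarrow> real" where
  "lin_pred d p q T X z \<theta> = (\<Sum>v\<in>feat_idx d p q. \<theta> v * feature d T X z v)"

definition l1_norm :: "nat \<Rightarrow> nat \<Rightarrow> nat \<Rightarrow> (nat list + nat \<Rightarrow> real) \<Rightarrow> real" where
  "l1_norm d p q \<theta> = (\<Sum>v\<in>feat_idx d p q. \<bar>\<theta> v\<bar>)"

text \<open>B_{p,r}: parameter vectors in R^{s_d(p)+q} (functions supported on the index set).\<close>
definition l1_ball :: "nat \<Rightarrow> nat \<Rightarrow> nat \<Rightarrow> real \<Rightarrow> (nat list + nat \<Rightarrow> real) set" where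
  "l1_ball d p q r = {\<theta>. (\<forall>v. v \<notin> feat_idx d p q \<longrightarrow> \<theta> v = 0) \<and> l1_norm d p q \<theta> \<le> r}"

definition s_d :: "nat \<Rightarrow> nat \<Rightarrow> nat" where
  "s_d d p = (\<Sum>k\<le>p. d ^ k)"

definition logistic_loss :: "real \<Rightarrow> real \<Rightarrow> real" where
  "logistic_loss y \<eta> = - y * \<eta> + ln (1 + exp \<eta>)"

definition euclid_norm :: "nat \<Rightarrow> (nat \<Rightarrow> real) \<Rightarrow> real" where
  "euclid_norm m v = sqrt (\<Sum>j<m. (v j)\<^sup>2)"

definition variation_sums :: "nat \<Rightarrow> (real \<Rightarrow> nat \<Rightarrow> real) \<Rightarrow> real \<Rightarrow> real set" where
  "variation_sums m X T =
     {(\<Sum>i<k. euclid_norm m (\<lambda>j. X (t (Suc i)) j - X (t i) j)) | k t.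
        t 0 = 0 \<and> t k = T \<and> (\<forall>i<k. t i \<le> t (Suc i))}"

definition total_variation :: "nat \<Rightarrow> (real \<Rightarrow> nat \<Rightarrow> real) \<Rightarrow> real \<Rightarrow> real" where
  "total_variation m X T = Sup (variation_sums m X T)"

definition bounded_variation :: "nat \<Rightarrow> (real \<Rightarrow> nat \<Rightarrow> real) \<Rightarrow> real \<Rightarrow> bool" where
  "bounded_variation m X T = bdd_above (variation_sums m X T)"

definition emp_risk :: "nat \<Rightarrow> nat \<Rightarrow> nat \<Rightarrow> real \<Rightarrow> ('a \<Rightarrow> real \<Rightarrow> nat \<Rightarrow> real) \<Rightarrow> ('a \<Rightarrow> nat \<Rightarrow> real)
   \<Rightarrow> ('a \<Rightarrow> real) \<Rightarrow> nat \<Rightarrow> (nat \<Rightarrow> 'a) \<Rightarrow> (nat list + nat \<Rightarrow> real) \<Rightarrow> real" where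
  "emp_risk d p q T X z y n w \<theta> =
     (1 / real n) * (\<Sum>i<n. logistic_loss (y (w i)) (lin_pred d p q T (X (w i)) (z (w i)) \<theta>))"

definition risk :: "'a measure \<Rightarrow> nat \<Rightarrow> nat \<Rightarrow> nat \<Rightarrow> real \<Rightarrow> ('a \<Rightarrow> real \<Rightarrow> nat \<Rightarrow> real) \<Rightarrow> ('a \<Rightarrow> nat \<Rightarrow> real)
   \<Rightarrow> ('a \<Rightarrow> real) \<Rightarrow> (nat list + nat \<Rightarrow> real) \<Rightarrow> real" where
  "risk M d p q T X z y \<theta> =
     (\<integral>\<omega>. logistic_loss (y \<omega>) (lin_pred d p q T (X \<omega>) (z \<omega>) \<theta>) \<partial>M)"

definition Z_proc :: "'a measure \<Rightarrow> nat \<Rightarrow> nat \<Rightarrow> nat \<Rightarrow> real \<Rightarrow> ('a \<Rightarrow> real \<Rightarrow> nat \<Rightarrow> real) \<Rightarrow> ('a \<Rightarrow> nat \<Rightarrow> real)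
   \<Rightarrow> ('a \<Rightarrow> real) \<Rightarrow> nat \<Rightarrow> (nat \<Rightarrow> 'a) \<Rightarrow> (nat list + nat \<Rightarrow> real) \<Rightarrow> real" where
  "Z_proc M d p q T X z y n w \<theta> = emp_risk d p q T X z y n w \<theta> - risk M d p q T X z y \<theta>"

end

theory Submission
  imports Defs "HOL-Probability.Probability"
begin


definition tagp :: "real \<Rightarrow> real \<Rightarrow> real \<Rightarrow> nat \<Rightarrow> (nat \<Rightarrow> real) \<Rightarrow> (nat \<Rightarrow> real) \<Rightarrow> bool" where
  "tagp \<delta> a b m t s \<longleftrightarrow> t 0 = a \<and> t m = b \<and> (\<forall>i<m. t i \<le> s i \<and> s i \<le> t (Suc i) \<and> t (Suc i) - t i < \<delta>)"

definition rsum :: "(real \<Rightarrow> real) \<Rightarrow> (real \<Rightarrow> real) \<Rightarrow> nat \<Rightarrow> (nat \<Rightarrow> real) \<Rightarrow> (nat \<Rightarrow> real) \<Rightarrow> real" where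
  "rsum f g m t s = (\<Sum>i<m. f (s i) * (g (t (Suc i)) - g (t i)))"

definition domin :: "(real \<Rightarrow> real) \<Rightarrow> (real \<Rightarrow> real) \<Rightarrow> real \<Rightarrow> real \<Rightarrow> bool" where
  "domin g W a b \<longleftrightarrow> (\<forall>u v. a \<le> u \<longrightarrow> u \<le> v \<longrightarrow> v \<le> b \<longrightarrow> \<bar>g v - g u\<bar> \<le> W v - W u)"

lemma has_RS_alt:
  "has_RS_integral f g a b I \<longleftrightarrow> (\<forall>\<epsilon>>0. \<exists>\<delta>>0. \<forall>m t s. tagp \<delta> a b m t s \<longrightarrow> \<bar>rsum f g m t s - I\<bar> < \<epsilon>)"
  unfolding has_RS_integral_def tagp_def rsum_def by blast

lemma tagp_mono:
  assumes "tagp \<delta> a b m t s" "i \<le> j" "j \<le> m"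
  shows "t i \<le> t j"
  using assms(2,3)
proof (induction j)
  case 0 then show ?case by simp
next
  case (Suc j)
  show ?case
  proof (cases "i = Suc j")
    case True then show ?thesis by simp
  next
    case False
    then have "i \<le> j" "j < m" using Suc by auto
    then have "t i \<le> t j" using Suc by auto
    moreover have "t j \<le> t (Suc j)" using assms(1) \<open>j < m\<close> unfolding tagp_def by force
    ultimately show ?thesis by simp
  qed
qed

lemma tagp_range:
  assumes "tagp \<delta> a b m t s" "i \<le> m"
  shows "a \<le> t i" "t i \<le> b"
  using tagp_mono[OF assms(1), of 0 i] tagp_mono[OF assms(1), of i m] assms unfolding tagp_def by auto

lemma tagp_tag:
  assumes "tagp \<delta> a b m t s" "i < m"
  shows "t i \<le> s i" "s i \<le> t (Suc i)" "t (Suc i) - t i < \<delta>"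
  using assms unfolding tagp_def by auto

lemma clamp_tele:
  fixes h :: "real \<Rightarrow> real"
  assumes "tagp \<delta> a b m t s" "tagp \<delta>' a b m' t' s'" "i < m"
  shows "h (t (Suc i)) - h (t i) =
     (\<Sum>j<m'. h (max (t i) (min (t (Suc i)) (t' (Suc j)))) - h (max (t i) (min (t (Suc i)) (t' j))))"
proof -
  have "(\<Sum>j<m'. h (max (t i) (min (t (Suc i)) (t' (Suc j)))) - h (max (t i) (min (t (Suc i)) (t' j))))
      = h (max (t i) (min (t (Suc i)) (t' m'))) - h (max (t i) (min (t (Suc i)) (t' 0)))"
    by (rule sum_lessThan_telescope[of "\<lambda>j. h (max (t i) (min (t (Suc i)) (t' j)))"])
  moreover have "t' m' = b" "t' 0 = a" using assms(2) unfolding tagp_def by auto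
  moreover have "a \<le> t i" "t (Suc i) \<le> b" "t i \<le> t (Suc i)"
    using tagp_range[OF assms(1)] tagp_tag[OF assms(1,3)] assms(3) by auto
  then have "max (t i) (min (t (Suc i)) b) = t (Suc i)" "max (t i) (min (t (Suc i)) a) = t i" by auto
  ultimately show ?thesis by simp
qed

lemma clamp_swap:
  fixes \<alpha> \<beta> \<gamma> \<epsilon> :: real and h :: "real \<Rightarrow> real"
  assumes "\<alpha> \<le> \<beta>" "\<gamma> \<le> \<epsilon>"
  shows "h (max \<alpha> (min \<beta> \<epsilon>)) - h (max \<alpha> (min \<beta> \<gamma>)) = h (max \<gamma> (min \<epsilon> \<beta>)) - h (max \<gamma> (min \<epsilon> \<alpha>))"
proof -
  have "(max \<alpha> (min \<beta> \<epsilon>) = max \<gamma> (min \<epsilon> \<beta>) \<and> max \<alpha> (min \<beta> \<gamma>) = max \<gamma> (min \<epsilon> \<alpha>)) \<or>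
        (max \<alpha> (min \<beta> \<epsilon>) = max \<alpha> (min \<beta> \<gamma>) \<and> max \<gamma> (min \<epsilon> \<beta>) = max \<gamma> (min \<epsilon> \<alpha>))"
    using assms by (auto simp: max_def min_def)
  then show ?thesis by auto
qed

lemma rsum_cauchy:
  assumes P: "tagp \<delta> a b m t s" and Q: "tagp \<delta> a b m' t' s'" and D: "domin g W a b"
    and U: "\<And>u v. u \<in> {a..b} \<Longrightarrow> v \<in> {a..b} \<Longrightarrow> \<bar>u - v\<bar> < 2 * \<delta> \<Longrightarrow> \<bar>f u - f v\<bar> \<le> \<eta>"
    and eta: "\<eta> \<ge> 0"
  shows "\<bar>rsum f g m t s - rsum f g m' t' s'\<bar> \<le> \<eta> * (W b - W a)"
proof -
  define cl where "cl i u = max (t i) (min (t (Suc i)) u)" for i u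
  define \<kappa> where "\<kappa> i j = g (cl i (t' (Suc j))) - g (cl i (t' j))" for i j
  define \<nu> where "\<nu> i j = W (cl i (t' (Suc j))) - W (cl i (t' j))" for i j
  have r1: "rsum f g m t s = (\<Sum>i<m. \<Sum>j<m'. f (s i) * \<kappa> i j)"
    unfolding rsum_def \<kappa>_def cl_def
    by (rule sum.cong[OF refl], subst clamp_tele[OF P Q], simp_all add: sum_distrib_left)
  have sw: "g (t' (Suc j)) - g (t' j) = (\<Sum>i<m. \<kappa> i j)" if j: "j < m'" for j
  proof -
    have "g (t' (Suc j)) - g (t' j) = (\<Sum>i<m. g (max (t' j) (min (t' (Suc j)) (t (Suc i)))) - g (max (t' j) (min (t' (Suc j)) (t i))))"
      by (rule clamp_tele[OF Q P j])
    also have "\<dots> = (\<Sum>i<m. \<kappa> i j)"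
    proof (rule sum.cong[OF refl])
      fix i assume "i \<in> {..<m}"
      then have "t i \<le> t (Suc i)" using tagp_tag[OF P] by force
      moreover have "t' j \<le> t' (Suc j)" using tagp_tag[OF Q j] by force
      ultimately show "g (max (t' j) (min (t' (Suc j)) (t (Suc i)))) - g (max (t' j) (min (t' (Suc j)) (t i))) = \<kappa> i j"
        unfolding \<kappa>_def cl_def by (rule clamp_swap[symmetric])
    qed
    finally show ?thesis .
  qed
  have r2: "rsum f g m' t' s' = (\<Sum>i<m. \<Sum>j<m'. f (s' j) * \<kappa> i j)"
    unfolding rsum_def
    by (subst sum.swap, rule sum.cong[OF refl], simp add: sw sum_distrib_left)
  have diff: "rsum f g m t s - rsum f g m' t' s' = (\<Sum>i<m. \<Sum>j<m'. (f (s i) - f (s' j)) * \<kappa> i j)"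
    unfolding r1 r2 by (simp add: sum_subtractf[symmetric] left_diff_distrib)
  have trm: "\<bar>(f (s i) - f (s' j)) * \<kappa> i j\<bar> \<le> \<eta> * \<nu> i j" if i: "i < m" and j: "j < m'" for i j
  proof -
    note ti = tagp_tag[OF P i] and tj = tagp_tag[OF Q j]
    have ra: "a \<le> t i" "t (Suc i) \<le> b" using tagp_range[OF P] i by auto
    have rb: "a \<le> t' j" "t' (Suc j) \<le> b" using tagp_range[OF Q] j by auto
    have c1: "t i \<le> cl i (t' j)" "cl i (t' j) \<le> cl i (t' (Suc j))" "cl i (t' (Suc j)) \<le> t (Suc i)"
      unfolding cl_def using ti tj by auto
    have kb: "\<bar>\<kappa> i j\<bar> \<le> \<nu> i j"
      unfolding \<kappa>_def \<nu>_def using D c1 ra unfolding domin_def by (meson order_trans)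
    show ?thesis
    proof (cases "max (t i) (t' j) \<le> min (t (Suc i)) (t' (Suc j))")
      case True
      then have "\<bar>s i - s' j\<bar> < 2 * \<delta>" using ti tj by (auto simp: abs_if)
      moreover have "s i \<in> {a..b}" "s' j \<in> {a..b}" using ti tj ra rb by auto
      ultimately have "\<bar>f (s i) - f (s' j)\<bar> \<le> \<eta>" using U by blast
      then show ?thesis unfolding abs_mult
        by (rule mult_mono) (use kb eta in auto)
    next
      case False
      then have "cl i (t' j) = cl i (t' (Suc j))" unfolding cl_def using ti tj by (auto simp: max_def min_def)
      then have "\<kappa> i j = 0" "\<nu> i j = 0" unfolding \<kappa>_def \<nu>_def by auto
      then show ?thesis by simp
    qed
  qed
  have nsum: "(\<Sum>i<m. \<Sum>j<m'. \<nu> i j) = W b - W a"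
  proof -
    have "(\<Sum>i<m. \<Sum>j<m'. \<nu> i j) = (\<Sum>i<m. W (t (Suc i)) - W (t i))"
      unfolding \<nu>_def cl_def by (rule sum.cong[OF refl], subst clamp_tele[OF P Q], auto)
    also have "\<dots> = W (t m) - W (t 0)" by (rule sum_lessThan_telescope[of "\<lambda>i. W (t i)"])
    finally show ?thesis using P unfolding tagp_def by simp
  qed
  have "\<bar>rsum f g m t s - rsum f g m' t' s'\<bar> \<le> (\<Sum>i<m. \<Sum>j<m'. \<bar>(f (s i) - f (s' j)) * \<kappa> i j\<bar>)"
    unfolding diff by (rule order_trans[OF sum_abs], rule sum_mono, rule sum_abs)
  also have "\<dots> \<le> (\<Sum>i<m. \<Sum>j<m'. \<eta> * \<nu> i j)"
    by (rule sum_mono, rule sum_mono, rule trm) auto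
  also have "\<dots> = \<eta> * (W b - W a)" by (simp add: sum_distrib_left[symmetric] nsum)
  finally show ?thesis .
qed


definition upart :: "real \<Rightarrow> real \<Rightarrow> nat \<Rightarrow> nat \<Rightarrow> real" where
  "upart a b m i = a + (b - a) * real i / real m"

definition usum :: "(real \<Rightarrow> real) \<Rightarrow> (real \<Rightarrow> real) \<Rightarrow> real \<Rightarrow> real \<Rightarrow> nat \<Rightarrow> real" where
  "usum f g a b m = rsum f g m (upart a b m) (upart a b m)"

lemma upart_tagp:
  assumes "a \<le> b" "m \<ge> 1" "(b - a) / real m < \<delta>"
  shows "tagp \<delta> a b m (upart a b m) (upart a b m)"
  unfolding tagp_def upart_def
proof (intro conjI allI impI)
  show "a + (b - a) * real m / real m = b" using assms by simp
  fix i assume "i < m"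
  have "(b - a) * real (Suc i) - (b - a) * real i = b - a" by (simp add: algebra_simps)
  then have "(b - a) * real (Suc i) / real m - (b - a) * real i / real m = (b - a) / real m"
    by (metis diff_divide_distrib)
  then show "a + (b - a) * real (Suc i) / real m - (a + (b - a) * real i / real m) < \<delta>" using assms by simp
  show "a + (b - a) * real i / real m \<le> a + (b - a) * real (Suc i) / real m"
    using assms by (intro add_left_mono divide_right_mono mult_left_mono) auto
qed auto

lemma upart_fine:
  assumes "a \<le> b" "\<delta> > 0"
  shows "\<exists>N. \<forall>m\<ge>N. tagp \<delta> a b (Suc m) (upart a b (Suc m)) (upart a b (Suc m))"
proof -
  obtain N :: nat where N: "(b - a) / \<delta> < real N" using reals_Archimedean2 by blast
  show ?thesis
  proof (intro exI allI impI)
    fix m assume "N \<le> m"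
    then have "(b - a) / \<delta> < real (Suc m)" using N by linarith
    then have "(b - a) < \<delta> * real (Suc m)" using assms by (simp add: field_simps)
    then have "(b - a) / real (Suc m) < \<delta>" by (simp add: field_simps)
    then show "tagp \<delta> a b (Suc m) (upart a b (Suc m)) (upart a b (Suc m))"
      using upart_tagp[OF assms(1), of "Suc m"] by auto
  qed
qed

lemma RS_tends:
  assumes "has_RS_integral f g a b I" "a \<le> b"
  shows "(\<lambda>m. usum f g a b (Suc m)) \<longlonglongrightarrow> I"
proof (rule LIMSEQ_I)
  fix r :: real assume "r > 0"
  then obtain \<delta> where d: "\<delta> > 0" "\<And>m t s. tagp \<delta> a b m t s \<Longrightarrow> \<bar>rsum f g m t s - I\<bar> < r"
    using assms(1) unfolding has_RS_alt by blast
  obtain N where "\<forall>m\<ge>N. tagp \<delta> a b (Suc m) (upart a b (Suc m)) (upart a b (Suc m))"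
    using upart_fine[OF assms(2) d(1)] by blast
  then show "\<exists>no. \<forall>n\<ge>no. norm (usum f g a b (Suc n) - I) < r"
    using d(2) unfolding usum_def real_norm_def by blast
qed

lemma RS_unique:
  assumes "has_RS_integral f g a b I" "has_RS_integral f g a b I'" "a \<le> b"
  shows "I = I'"
  using RS_tends[OF assms(1,3)] RS_tends[OF assms(2,3)] LIMSEQ_unique by blast

lemma RS_integral_eq:
  assumes "has_RS_integral f g a b I" "a \<le> b"
  shows "RS_integral f g a b = I"
  unfolding RS_integral_def using RS_unique assms by blast

lemma uc_mod:
  fixes f :: "real \<Rightarrow> real"
  assumes "continuous_on {a..b} f" "\<eta> > 0"
  shows "\<exists>\<delta>>0. \<forall>u\<in>{a..b}. \<forall>v\<in>{a..b}. \<bar>u - v\<bar> < 2 * \<delta> \<longrightarrow> \<bar>f u - f v\<bar> \<le> \<eta>"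
proof -
  have "uniformly_continuous_on {a..b} f"
    using assms(1) by (rule compact_uniformly_continuous) simp
  then obtain d where d: "d > 0" "\<And>x x'. x \<in> {a..b} \<Longrightarrow> x' \<in> {a..b} \<Longrightarrow> dist x' x < d \<Longrightarrow> dist (f x') (f x) < \<eta>"
    unfolding uniformly_continuous_on_def using assms(2) by metis
  show ?thesis
    by (rule exI[of _ "d/2"]) (use d in \<open>auto simp: dist_real_def\<close>, smt (verit, best) d(2) dist_real_def)
qed

lemma domin_nonneg:
  assumes "domin g W a b" "a \<le> u" "u \<le> v" "v \<le> b"
  shows "W u \<le> W v"
  using assms unfolding domin_def by (meson abs_ge_zero order_trans diff_ge_0_iff_ge)

lemma RS_exists:
  fixes f :: "real \<Rightarrow> real"
  assumes ab: "a \<le> b" and fc: "continuous_on {a..b} f" and D: "domin g W a b"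
  shows "has_RS_integral f g a b (RS_integral f g a b)"
proof -
  define Vt where "Vt = W b - W a"
  have Vt: "Vt \<ge> 0" using domin_nonneg[OF D] ab unfolding Vt_def by auto
  define \<sigma> where "\<sigma> m = usum f g a b (Suc m)" for m
  have key: "\<exists>\<delta>>0. \<exists>N. \<forall>m\<ge>N. \<forall>k t s. tagp \<delta> a b k t s \<longrightarrow> \<bar>rsum f g k t s - \<sigma> m\<bar> \<le> e / 2"
    if e: "e > 0" for e
  proof -
    define \<eta> where "\<eta> = e / (2 * (Vt + 1))"
    have eta: "\<eta> > 0" using e Vt unfolding \<eta>_def by auto
    have eVt: "\<eta> * Vt \<le> e / 2"
    proof -
      have "\<eta> * Vt \<le> \<eta> * (Vt + 1)" using eta by simp
      also have "\<dots> = e / 2" unfolding \<eta>_def using Vt by (simp add: field_simps)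
      finally show ?thesis .
    qed
    obtain \<delta> where d: "\<delta> > 0" "\<forall>u\<in>{a..b}. \<forall>v\<in>{a..b}. \<bar>u - v\<bar> < 2 * \<delta> \<longrightarrow> \<bar>f u - f v\<bar> \<le> \<eta>"
      using uc_mod[OF fc eta] by blast
    obtain N where N: "\<forall>m\<ge>N. tagp \<delta> a b (Suc m) (upart a b (Suc m)) (upart a b (Suc m))"
      using upart_fine[OF ab d(1)] by blast
    have "\<bar>rsum f g k t s - \<sigma> m\<bar> \<le> e / 2" if "m \<ge> N" "tagp \<delta> a b k t s" for m k t s
    proof -
      have "\<bar>rsum f g k t s - \<sigma> m\<bar> \<le> \<eta> * (W b - W a)"
        unfolding \<sigma>_def usum_def
        by (rule rsum_cauchy[OF that(2) N[rule_format, OF that(1)] D]) (use d eta in auto)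
      then show ?thesis using eVt unfolding Vt_def by simp
    qed
    then show ?thesis using d(1) by blast
  qed
  have "Cauchy \<sigma>"
  proof (rule metric_CauchyI)
    fix e :: real assume "e > 0"
    then obtain \<delta> N where dN: "\<delta> > 0" "\<forall>m\<ge>N. \<forall>k t s. tagp \<delta> a b k t s \<longrightarrow> \<bar>rsum f g k t s - \<sigma> m\<bar> \<le> e / 4"
      using key[of "e/2"] by auto
    obtain N' where N': "\<forall>m\<ge>N'. tagp \<delta> a b (Suc m) (upart a b (Suc m)) (upart a b (Suc m))"
      using upart_fine[OF ab dN(1)] by blast
    show "\<exists>M. \<forall>m\<ge>M. \<forall>n\<ge>M. dist (\<sigma> m) (\<sigma> n) < e"
    proof (intro exI allI impI)
      fix m n assume "max N N' \<le> m" "max N N' \<le> n"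
      then have "\<bar>\<sigma> n - \<sigma> m\<bar> \<le> e / 4" "\<bar>\<sigma> n - \<sigma> n\<bar> \<le> e / 4"
        using dN(2) N' unfolding \<sigma>_def usum_def by (metis max.bounded_iff)+
      then show "dist (\<sigma> m) (\<sigma> n) < e" using \<open>e > 0\<close> by (simp add: dist_real_def abs_minus_commute)
    qed
  qed
  then obtain L where L: "\<sigma> \<longlonglongrightarrow> L" using convergent_def Cauchy_convergent_iff by blast
  have "has_RS_integral f g a b L"
    unfolding has_RS_alt
  proof (intro allI impI)
    fix e :: real assume "e > 0"
    then obtain \<delta> N where dN: "\<delta> > 0" "\<forall>m\<ge>N. \<forall>k t s. tagp \<delta> a b k t s \<longrightarrow> \<bar>rsum f g k t s - \<sigma> m\<bar> \<le> e / 2"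
      using key by blast
    have "\<bar>rsum f g k t s - L\<bar> < e" if "tagp \<delta> a b k t s" for k t s
    proof -
      have "(\<lambda>m. \<bar>rsum f g k t s - \<sigma> m\<bar>) \<longlonglongrightarrow> \<bar>rsum f g k t s - L\<bar>"
        by (intro tendsto_intros L)
      then have "\<bar>rsum f g k t s - L\<bar> \<le> e / 2"
        by (rule LIMSEQ_le_const2) (use dN(2) that in blast)
      then show ?thesis using \<open>e > 0\<close> by simp
    qed
    then show "\<exists>\<delta>>0. \<forall>m t s. tagp \<delta> a b m t s \<longrightarrow> \<bar>rsum f g m t s - L\<bar> < e" using dN(1) by blast
  qed
  then show ?thesis using RS_integral_eq ab by simp
qed


lemma sum_split_add: "(\<Sum>i<m1 + m2. F i) = (\<Sum>i<m1. F i) + (\<Sum>i<(m2::nat). F (m1 + i))"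
  by (induction m2) (auto simp: add.assoc)

lemma tagp_mono_delta: "tagp \<delta> a b m t s \<Longrightarrow> \<delta> \<le> \<delta>' \<Longrightarrow> tagp \<delta>' a b m t s"
  unfolding tagp_def by force

lemma tagp_concat:
  assumes P1: "tagp \<delta> a c m1 t1 s1" and P2: "tagp \<delta> c b m2 t2 s2"
  defines "T \<equiv> \<lambda>i. if i \<le> m1 then t1 i else t2 (i - m1)"
  defines "S \<equiv> \<lambda>i. if i < m1 then s1 i else s2 (i - m1)"
  shows "tagp \<delta> a b (m1 + m2) T S" "rsum f g (m1 + m2) T S = rsum f g m1 t1 s1 + rsum f g m2 t2 s2"
proof -
  have c: "t1 m1 = c" "t2 0 = c" "t1 0 = a" "t2 m2 = b" using P1 P2 unfolding tagp_def by auto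
  have T2: "T (m1 + i) = t2 i" for i using c by (cases i) (auto simp: T_def)
  have T1: "i \<le> m1 \<Longrightarrow> T i = t1 i" for i by (simp add: T_def)
  have A: "\<forall>i<m1 + m2. T i \<le> S i \<and> S i \<le> T (Suc i) \<and> T (Suc i) - T i < \<delta>"
  proof (intro allI impI)
    fix i assume i: "i < m1 + m2"
    show "T i \<le> S i \<and> S i \<le> T (Suc i) \<and> T (Suc i) - T i < \<delta>"
    proof (cases "i < m1")
      case True
      then show ?thesis using tagp_tag[OF P1 True] T1[of i] T1[of "Suc i"] by (simp add: S_def)
    next
      case False
      then obtain j where j: "i = m1 + j" "j < m2" using i by (metis add_less_imp_less_left le_Suc_ex not_less)
      then show ?thesis using tagp_tag[OF P2 j(2)] T2[of j] T2[of "Suc j"] by (simp add: S_def)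
    qed
  qed
  moreover have "T 0 = a" using c by (simp add: T_def)
  moreover have "T (m1 + m2) = b" using T2[of m2] c by simp
  ultimately show "tagp \<delta> a b (m1 + m2) T S" unfolding tagp_def by blast
  show "rsum f g (m1 + m2) T S = rsum f g m1 t1 s1 + rsum f g m2 t2 s2"
    unfolding rsum_def sum_split_add
  proof (intro arg_cong2[where f="(+)"])
    show "(\<Sum>i<m1. f (S i) * (g (T (Suc i)) - g (T i))) = (\<Sum>i<m1. f (s1 i) * (g (t1 (Suc i)) - g (t1 i)))"
      by (rule sum.cong) (auto simp: S_def T1)
    show "(\<Sum>i<m2. f (S (m1 + i)) * (g (T (Suc (m1 + i))) - g (T (m1 + i)))) = (\<Sum>i<m2. f (s2 i) * (g (t2 (Suc i)) - g (t2 i)))"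
      using T2 by (intro sum.cong) (auto simp: S_def simp flip: add_Suc_right)
  qed
qed

lemma RS_additive:
  assumes "a \<le> c" "c \<le> b"
    and H1: "has_RS_integral f g a c I1" and H2: "has_RS_integral f g c b I2" and H: "has_RS_integral f g a b I"
  shows "I = I1 + I2"
proof -
  have "\<bar>I - (I1 + I2)\<bar> \<le> 3 * e" if e: "e > 0" for e
  proof -
    obtain d1 where d1: "d1 > 0" "\<And>m t s. tagp d1 a c m t s \<Longrightarrow> \<bar>rsum f g m t s - I1\<bar> < e"
      using H1 e unfolding has_RS_alt by blast
    obtain d2 where d2: "d2 > 0" "\<And>m t s. tagp d2 c b m t s \<Longrightarrow> \<bar>rsum f g m t s - I2\<bar> < e"
      using H2 e unfolding has_RS_alt by blast
    obtain d where d: "d > 0" "\<And>m t s. tagp d a b m t s \<Longrightarrow> \<bar>rsum f g m t s - I\<bar> < e"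
      using H e unfolding has_RS_alt by blast
    define \<delta> where "\<delta> = min d (min d1 d2)"
    have "\<delta> > 0" using d d1 d2 by (simp add: \<delta>_def)
    obtain N1 where N1: "tagp \<delta> a c (Suc N1) (upart a c (Suc N1)) (upart a c (Suc N1))"
      using upart_fine[OF assms(1) \<open>\<delta> > 0\<close>] by blast
    obtain N2 where N2: "tagp \<delta> c b (Suc N2) (upart c b (Suc N2)) (upart c b (Suc N2))"
      using upart_fine[OF assms(2) \<open>\<delta> > 0\<close>] by blast
    note cc = tagp_concat[OF N1 N2]
    have "\<bar>rsum f g (Suc N1) (upart a c (Suc N1)) (upart a c (Suc N1)) - I1\<bar> < e"
      by (rule d1(2), rule tagp_mono_delta[OF N1]) (simp add: \<delta>_def)
    moreover have "\<bar>rsum f g (Suc N2) (upart c b (Suc N2)) (upart c b (Suc N2)) - I2\<bar> < e"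
      by (rule d2(2), rule tagp_mono_delta[OF N2]) (simp add: \<delta>_def)
    moreover have "\<bar>rsum f g (Suc N1) (upart a c (Suc N1)) (upart a c (Suc N1)) + rsum f g (Suc N2) (upart c b (Suc N2)) (upart c b (Suc N2)) - I\<bar> < e"
      unfolding cc(2)[symmetric] by (rule d(2), rule tagp_mono_delta[OF cc(1)]) (simp add: \<delta>_def)
    ultimately show ?thesis by linarith
  qed
  note * = this
  have "\<bar>I - (I1 + I2)\<bar> \<le> 0"
  proof (rule field_le_epsilon)
    fix e :: real assume "0 < e"
    then have "\<bar>I - (I1 + I2)\<bar> \<le> 3 * (e / 3)" using *[of "e/3"] by simp
    then show "\<bar>I - (I1 + I2)\<bar> \<le> 0 + e" by simp
  qed
  then show ?thesis by simp
qed

lemma domin_sub: "domin g W a b \<Longrightarrow> a \<le> u \<Longrightarrow> v \<le> b \<Longrightarrow> domin g W u v"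
  unfolding domin_def by auto

lemma rsum_near_const:
  assumes P: "tagp \<delta> u v m t s" and D: "domin g W u v"
    and F: "\<And>x. x \<in> {u..v} \<Longrightarrow> \<bar>f x - c\<bar> \<le> \<eta>"
  shows "\<bar>rsum f g m t s - c * (g v - g u)\<bar> \<le> \<eta> * (W v - W u)"
proof -
  have tg: "(\<Sum>i<m. g (t (Suc i)) - g (t i)) = g v - g u" "(\<Sum>i<m. W (t (Suc i)) - W (t i)) = W v - W u"
    using sum_lessThan_telescope[of "\<lambda>i. g (t i)" m] sum_lessThan_telescope[of "\<lambda>i. W (t i)" m] P
    unfolding tagp_def by auto
  have "rsum f g m t s - c * (g v - g u) = (\<Sum>i<m. (f (s i) - c) * (g (t (Suc i)) - g (t i)))"
    unfolding rsum_def tg(1)[symmetric] by (simp add: sum_distrib_left sum_subtractf[symmetric] left_diff_distrib)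
  also have "\<bar>\<dots>\<bar> \<le> (\<Sum>i<m. \<eta> * (W (t (Suc i)) - W (t i)))"
  proof (rule order_trans[OF sum_abs], rule sum_mono)
    fix i assume "i \<in> {..<m}"
    then have i: "i < m" by simp
    note ti = tagp_tag[OF P i]
    have r: "u \<le> t i" "t (Suc i) \<le> v" using tagp_range[OF P] i by auto
    have "\<bar>g (t (Suc i)) - g (t i)\<bar> \<le> W (t (Suc i)) - W (t i)"
      using D r ti unfolding domin_def by auto
    moreover have "\<bar>f (s i) - c\<bar> \<le> \<eta>" using F r ti by auto
    ultimately show "\<bar>(f (s i) - c) * (g (t (Suc i)) - g (t i))\<bar> \<le> \<eta> * (W (t (Suc i)) - W (t i))"
      unfolding abs_mult by (intro mult_mono) auto
  qed
  also have "\<dots> = \<eta> * (W v - W u)" by (simp add: sum_distrib_left[symmetric] tg(2))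
  finally show ?thesis .
qed

lemma RS_near_const:
  assumes "u \<le> v" "has_RS_integral f g u v I" "domin g W u v"
    and F: "\<And>x. x \<in> {u..v} \<Longrightarrow> \<bar>f x - c\<bar> \<le> \<eta>"
  shows "\<bar>I - c * (g v - g u)\<bar> \<le> \<eta> * (W v - W u)"
proof -
  have "(\<lambda>m. \<bar>usum f g u v (Suc m) - c * (g v - g u)\<bar>) \<longlonglongrightarrow> \<bar>I - c * (g v - g u)\<bar>"
    by (intro tendsto_intros RS_tends assms)
  moreover have "\<bar>usum f g u v (Suc m) - c * (g v - g u)\<bar> \<le> \<eta> * (W v - W u)" for m
  proof -
    have "(v - u) / real (Suc m) \<le> (v - u) / 1"
      using assms(1) by (intro divide_left_mono) auto
    then have "tagp (v - u + 1) u v (Suc m) (upart u v (Suc m)) (upart u v (Suc m))"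
      using assms(1) by (intro upart_tagp) auto
    then show ?thesis unfolding usum_def by (rule rsum_near_const[OF _ assms(3) F])
  qed
  ultimately show ?thesis by (intro LIMSEQ_le_const2) auto
qed


lemma RS_exists_sub:
  fixes f :: "real \<Rightarrow> real"
  assumes "a \<le> u" "u \<le> v" "v \<le> b" "continuous_on {a..b} f" "domin g W a b"
  shows "has_RS_integral f g u v (RS_integral f g u v)"
  using RS_exists[of u v f g W] continuous_on_subset[OF assms(4), of "{u..v}"] domin_sub[OF assms(5), of u v] assms by auto

lemma RS_diff:
  fixes f :: "real \<Rightarrow> real"
  assumes "a \<le> u" "u \<le> v" "v \<le> b" "continuous_on {a..b} f" "domin g W a b"
  shows "RS_integral f g a v - RS_integral f g a u = RS_integral f g u v"
  using RS_additive[OF assms(1,2) RS_exists_sub[OF _ assms(1) _ assms(4,5)] RS_exists_sub[OF assms(1,2,3,4,5)]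
      RS_exists_sub[OF _ _ _ assms(4,5)]] assms by auto

lemma RS_diff_bound:
  fixes f :: "real \<Rightarrow> real"
  assumes "a \<le> u" "u \<le> v" "v \<le> b" "continuous_on {a..b} f" "domin g W a b"
    and F: "\<And>x. x \<in> {u..v} \<Longrightarrow> \<bar>f x - f u\<bar> \<le> \<eta>" and "\<eta> \<ge> 0"
  shows "\<bar>RS_integral f g a v - RS_integral f g a u\<bar> \<le> \<bar>f u\<bar> * \<bar>g v - g u\<bar> + \<eta> * (W b - W a)"
proof -
  have D: "domin g W u v" using domin_sub[OF assms(5)] assms by auto
  have "\<bar>RS_integral f g u v - f u * (g v - g u)\<bar> \<le> \<eta> * (W v - W u)"
    by (rule RS_near_const[OF assms(2) RS_exists_sub[OF assms(1-5)] D F])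
  moreover have "W v - W u \<le> W b - W a"
    using domin_nonneg[OF assms(5)] assms by (smt (verit))
  then have "\<eta> * (W v - W u) \<le> \<eta> * (W b - W a)" using assms(7) by (rule mult_left_mono)
  moreover have "\<bar>RS_integral f g u v\<bar> \<le> \<bar>RS_integral f g u v - f u * (g v - g u)\<bar> + \<bar>f u\<bar> * \<bar>g v - g u\<bar>"
    by (metis abs_mult abs_triangle_ineq diff_add_cancel)
  ultimately show ?thesis unfolding RS_diff[OF assms(1-5)] by linarith
qed

lemma cont_bound:
  fixes f :: "real \<Rightarrow> real"
  assumes "continuous_on {a..b} f"
  obtains B where "B \<ge> 0" "\<And>x. x \<in> {a..b} \<Longrightarrow> \<bar>f x\<bar> \<le> B"
proof -
  have "bounded (f ` {a..b})" by (rule compact_imp_bounded[OF compact_continuous_image[OF assms]]) simp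
  then obtain B where "\<forall>x\<in>f ` {a..b}. \<bar>x\<bar> \<le> B" unfolding bounded_real by blast
  then have "\<And>x. x \<in> {a..b} \<Longrightarrow> \<bar>f x\<bar> \<le> max B 0"
    by (metis image_eqI max.coboundedI1)
  then show ?thesis by (rule that[rotated]) (simp_all add: le_max_iff_disj)
qed

lemma RS_indef_cont:
  fixes f g :: "real \<Rightarrow> real"
  assumes ab: "a \<le> b" and fc: "continuous_on {a..b} f" and gc: "continuous_on {a..b} g" and D: "domin g W a b"
  shows "continuous_on {a..b} (\<lambda>t. RS_integral f g a t)"
  unfolding continuous_on_iff
proof (intro ballI allI impI)
  fix x e :: real assume x: "x \<in> {a..b}" and e: "e > 0"
  obtain B where B: "B \<ge> 0" "\<And>x. x \<in> {a..b} \<Longrightarrow> \<bar>f x\<bar> \<le> B" using cont_bound[OF fc] by blast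
  define Vt where "Vt = W b - W a"
  have Vt: "Vt \<ge> 0" using domin_nonneg[OF D] ab unfolding Vt_def by auto
  define \<eta> where "\<eta> = e / (2 * (Vt + 1))"
  have eta: "\<eta> > 0" using e Vt unfolding \<eta>_def by auto
  have eVt: "\<eta> * Vt \<le> e / 2"
  proof -
    have "\<eta> * Vt \<le> \<eta> * (Vt + 1)" using eta by simp
    also have "\<dots> = e / 2" unfolding \<eta>_def using Vt by (simp add: field_simps)
    finally show ?thesis .
  qed
  obtain d1 where d1: "d1 > 0" "\<forall>u\<in>{a..b}. \<forall>v\<in>{a..b}. \<bar>u - v\<bar> < 2 * d1 \<longrightarrow> \<bar>f u - f v\<bar> \<le> \<eta>"
    using uc_mod[OF fc eta] by blast
  define e2 where "e2 = e / (2 * (B + 1))"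
  have e2: "e2 > 0" using e B unfolding e2_def by auto
  have Be2: "B * e2 < e / 2"
  proof -
    have "B * e2 < (B + 1) * e2" using e2 by simp
    also have "\<dots> = e / 2" unfolding e2_def using B by (simp add: field_simps)
    finally show ?thesis .
  qed
  obtain d2 where d2: "d2 > 0" "\<forall>y\<in>{a..b}. dist y x < d2 \<longrightarrow> dist (g y) (g x) < e2"
    using gc x e2 unfolding continuous_on_iff by blast
  have main: "\<bar>RS_integral f g a y - RS_integral f g a x\<bar> < e" if y: "y \<in> {a..b}" "\<bar>y - x\<bar> < min d1 d2" for y
  proof -
    define u where "u = min x y"
    define v where "v = max x y"
    have uv: "a \<le> u" "u \<le> v" "v \<le> b" using x y unfolding u_def v_def by auto
    have F: "\<bar>f z - f u\<bar> \<le> \<eta>" if "z \<in> {u..v}" for z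
      using d1(2) that uv y unfolding u_def v_def by (auto simp: min_def max_def split: if_splits)
    have m1: "\<bar>RS_integral f g a v - RS_integral f g a u\<bar> \<le> \<bar>f u\<bar> * \<bar>g v - g u\<bar> + \<eta> * Vt"
      unfolding Vt_def by (rule RS_diff_bound[OF uv fc D F]) (use eta in auto)
    have gy: "\<bar>g y - g x\<bar> < e2" using d2(2) y by (auto simp: dist_real_def)
    moreover have "\<bar>g v - g u\<bar> = \<bar>g y - g x\<bar>"
      unfolding u_def v_def by (auto simp: min_def max_def abs_minus_commute)
    ultimately have "\<bar>g v - g u\<bar> < e2" by simp
    then have m2: "\<bar>f u\<bar> * \<bar>g v - g u\<bar> \<le> B * e2"
      using B uv by (intro mult_mono) auto
    have m3: "\<bar>RS_integral f g a y - RS_integral f g a x\<bar> = \<bar>RS_integral f g a v - RS_integral f g a u\<bar>"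
      unfolding u_def v_def by (auto simp: min_def max_def abs_minus_commute)
    show ?thesis using m1 m2 m3 eVt Be2 by linarith
  qed
  show "\<exists>d>0. \<forall>y\<in>{a..b}. dist y x < d \<longrightarrow> dist (RS_integral f g a y) (RS_integral f g a x) < e"
    using main d1 d2 by (intro exI[of _ "min d1 d2"]) (auto simp: dist_real_def)
qed

lemma pow_step_ineq:
  fixes x y :: real
  assumes "0 \<le> x" "x \<le> y"
  shows "x ^ k / fact k * (y - x) \<le> y ^ Suc k / fact (Suc k) - x ^ Suc k / fact (Suc k)"
proof -
  have "y ^ Suc k - x ^ Suc k = (y - x) * (\<Sum>i<Suc k. x ^ (Suc k - Suc i) * y ^ i)"
    by (rule power_diff_sumr2)
  moreover have "(\<Sum>i<Suc k. x ^ k) \<le> (\<Sum>i<Suc k. x ^ (Suc k - Suc i) * y ^ i)"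
  proof (rule sum_mono)
    fix i assume "i \<in> {..<Suc k}"
    then have "x ^ k = x ^ (k - i) * x ^ i" by (simp add: power_add[symmetric])
    also have "\<dots> \<le> x ^ (k - i) * y ^ i"
      using assms by (intro mult_left_mono power_mono) auto
    also have "\<dots> = x ^ (Suc k - Suc i) * y ^ i" by simp
    finally show "x ^ k \<le> x ^ (Suc k - Suc i) * y ^ i" .
  qed
  ultimately have "real (Suc k) * x ^ k * (y - x) \<le> y ^ Suc k - x ^ Suc k"
    using assms by (simp add: mult_left_mono mult.commute mult.left_commute)
  then have "real (Suc k) * x ^ k * (y - x) / fact (Suc k) \<le> (y ^ Suc k - x ^ Suc k) / fact (Suc k)"
    by (intro divide_right_mono) auto
  moreover have "real (Suc k) * x ^ k * (y - x) / fact (Suc k) = x ^ k / fact k * (y - x)"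
  proof -
    have "real (Suc k) * x ^ k * (y - x) / fact (Suc k) = (real (Suc k) * (x ^ k * (y - x))) / (real (Suc k) * fact k)"
      by (simp add: fact_Suc mult.assoc del: of_nat_Suc)
    also have "\<dots> = x ^ k * (y - x) / fact k" by (rule mult_divide_mult_cancel_left) simp
    finally show ?thesis by simp
  qed
  ultimately show ?thesis by (simp add: diff_divide_distrib)
qed

lemma rsum_fact_bound:
  assumes P: "tagp \<delta> a b m t t" and D: "domin g W a b"
    and F: "\<And>x. x \<in> {a..b} \<Longrightarrow> \<bar>f x\<bar> \<le> (W x - W a) ^ k / fact k"
  shows "\<bar>rsum f g m t t\<bar> \<le> (W b - W a) ^ Suc k / fact (Suc k)"
proof -
  define h where "h x = (W x - W a) ^ Suc k / fact (Suc k)" for x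
  have "\<bar>rsum f g m t t\<bar> \<le> (\<Sum>i<m. h (t (Suc i)) - h (t i))"
    unfolding rsum_def
  proof (rule order_trans[OF sum_abs], rule sum_mono)
    fix i assume "i \<in> {..<m}"
    then have i: "i < m" by simp
    note ti = tagp_tag[OF P i]
    have r: "a \<le> t i" "t (Suc i) \<le> b" using tagp_range[OF P] i by auto
    have g: "\<bar>g (t (Suc i)) - g (t i)\<bar> \<le> W (t (Suc i)) - W (t i)"
      using D r ti unfolding domin_def by auto
    have w: "0 \<le> W (t i) - W a" "W (t i) - W a \<le> W (t (Suc i)) - W a"
      using domin_nonneg[OF D] r ti by auto
    have "\<bar>f (t i) * (g (t (Suc i)) - g (t i))\<bar> \<le> (W (t i) - W a) ^ k / fact k * (W (t (Suc i)) - W (t i))"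
      unfolding abs_mult using F r ti g w by (intro mult_mono) auto
    also have "\<dots> \<le> h (t (Suc i)) - h (t i)"
      using pow_step_ineq[OF w, of k] unfolding h_def by simp
    finally show "\<bar>f (t i) * (g (t (Suc i)) - g (t i))\<bar> \<le> h (t (Suc i)) - h (t i)" .
  qed
  also have "\<dots> = h b - h a"
    using sum_lessThan_telescope[of "\<lambda>i. h (t i)" m] P unfolding tagp_def by auto
  finally show ?thesis unfolding h_def by simp
qed

lemma RS_fact_bound:
  assumes "a \<le> b" "has_RS_integral f g a b I" "domin g W a b"
    and F: "\<And>x. x \<in> {a..b} \<Longrightarrow> \<bar>f x\<bar> \<le> (W x - W a) ^ k / fact k"
  shows "\<bar>I\<bar> \<le> (W b - W a) ^ Suc k / fact (Suc k)"
proof -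
  have "(\<lambda>m. \<bar>usum f g a b (Suc m)\<bar>) \<longlonglongrightarrow> \<bar>I\<bar>"
    by (intro tendsto_intros RS_tends assms)
  moreover have "\<bar>usum f g a b (Suc m)\<bar> \<le> (W b - W a) ^ Suc k / fact (Suc k)" for m
  proof -
    have "(b - a) / real (Suc m) \<le> (b - a) / 1"
      using assms(1) by (intro divide_left_mono) auto
    then have "tagp (b - a + 1) a b (Suc m) (upart a b (Suc m)) (upart a b (Suc m))"
      using assms(1) by (intro upart_tagp) auto
    then show ?thesis unfolding usum_def by (rule rsum_fact_bound[OF _ assms(3) F])
  qed
  ultimately show ?thesis by (intro LIMSEQ_le_const2) auto
qed


lemma pow_fact_le_exp:
  fixes x :: real
  assumes "0 \<le> x"
  shows "x ^ n / fact n \<le> exp x"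
proof -
  have s: "summable (\<lambda>k. x ^ k / fact k)" using summable_exp[of x] by (simp add: inverse_eq_divide mult.commute)
  have "(\<Sum>k\<in>{n}. x ^ k / fact k) \<le> (\<Sum>k. x ^ k / fact k)"
    by (rule sum_le_suminf[OF s]) (use assms in auto)
  also have "\<dots> = exp x" by (simp add: exp_def inverse_eq_divide field_simps)
  finally show ?thesis by simp
qed

lemma sig_props:
  fixes Y :: "real \<Rightarrow> nat \<Rightarrow> real"
  assumes T: "0 \<le> T"
    and C: "\<And>j. j < d \<Longrightarrow> continuous_on {0..T} (\<lambda>t. Y t j)"
    and D: "\<And>j. j < d \<Longrightarrow> domin (\<lambda>t. Y t j) W 0 T"
  shows "set J \<subseteq> {..<d} \<Longrightarrow> continuous_on {0..T} (sig_rev Y J) \<and>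
     (\<forall>t\<in>{0..T}. \<bar>sig_rev Y J t\<bar> \<le> (W t - W 0) ^ length J / fact (length J))"
proof (induction J)
  case Nil
  then show ?case by (simp add: continuous_on_const)
next
  case (Cons i J)
  then have i: "i < d" and IH: "continuous_on {0..T} (sig_rev Y J)"
     "\<forall>t\<in>{0..T}. \<bar>sig_rev Y J t\<bar> \<le> (W t - W 0) ^ length J / fact (length J)" by auto
  have "continuous_on {0..T} (\<lambda>t. RS_integral (sig_rev Y J) (\<lambda>s. Y s i) 0 t)"
    by (rule RS_indef_cont[OF T IH(1) C[OF i] D[OF i]])
  moreover have "\<bar>RS_integral (sig_rev Y J) (\<lambda>s. Y s i) 0 t\<bar> \<le> (W t - W 0) ^ Suc (length J) / fact (Suc (length J))"
    if t: "t \<in> {0..T}" for t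
  proof (rule RS_fact_bound[where f="sig_rev Y J" and g="\<lambda>s. Y s i" and a=0 and b=t and W=W])
    show "0 \<le> t" using t by simp
    show "has_RS_integral (sig_rev Y J) (\<lambda>s. Y s i) 0 t (RS_integral (sig_rev Y J) (\<lambda>s. Y s i) 0 t)"
      by (rule RS_exists_sub[OF _ _ _ IH(1) D[OF i]]) (use t in auto)
    show "domin (\<lambda>s. Y s i) W 0 t" by (rule domin_sub[OF D[OF i]]) (use t in auto)
    fix x assume "x \<in> {0..t}"
    then show "\<bar>sig_rev Y J x\<bar> \<le> (W x - W 0) ^ length J / fact (length J)" using IH(2) t by auto
  qed
  ultimately show ?case by simp
qed

lemma sig_measurable:
  fixes Y :: "'a \<Rightarrow> real \<Rightarrow> nat \<Rightarrow> real"
  assumes T: "0 \<le> T"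
    and C: "\<And>\<omega> j. \<omega> \<in> space M \<Longrightarrow> j < d \<Longrightarrow> continuous_on {0..T} (\<lambda>t. Y \<omega> t j)"
    and D: "\<And>\<omega> j. \<omega> \<in> space M \<Longrightarrow> j < d \<Longrightarrow> domin (\<lambda>t. Y \<omega> t j) (W \<omega>) 0 T"
    and Mb: "\<And>t j. j < d \<Longrightarrow> (\<lambda>\<omega>. Y \<omega> t j) \<in> borel_measurable M"
  shows "set J \<subseteq> {..<d} \<Longrightarrow> t \<in> {0..T} \<Longrightarrow> (\<lambda>\<omega>. sig_rev (Y \<omega>) J t) \<in> borel_measurable M"
proof (induction J arbitrary: t)
  case Nil
  then show ?case by simp
next
  case (Cons i J)
  then have i: "i < d" and IH: "\<And>t. t \<in> {0..T} \<Longrightarrow> (\<lambda>\<omega>. sig_rev (Y \<omega>) J t) \<in> borel_measurable M"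
    and t: "t \<in> {0..T}" by auto
  have up: "upart 0 t m l \<in> {0..T}" if "l \<le> m" "m \<ge> 1" for m l
  proof -
    have "real l / real m \<le> 1" using that by simp
    then have "t * (real l / real m) \<le> t * 1" using t by (intro mult_left_mono) auto
    then show ?thesis using t unfolding upart_def by auto
  qed
  show ?case
  proof (rule borel_measurable_LIMSEQ_real)
    fix \<omega> assume w: "\<omega> \<in> space M"
    have props: "continuous_on {0..T} (sig_rev (Y \<omega>) J)"
      using sig_props[of T d "Y \<omega>" "W \<omega>" J] T C[OF w] D[OF w] Cons.prems by auto
    show "(\<lambda>m. usum (sig_rev (Y \<omega>) J) (\<lambda>s. Y \<omega> s i) 0 t (Suc m)) \<longlonglongrightarrow> sig_rev (Y \<omega>) (i # J) t"
      unfolding sig_rev.simps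
      by (rule RS_tends[OF RS_exists_sub[OF _ _ _ props D[OF w i]]]) (use t in auto)
  next
    fix m
    show "(\<lambda>\<omega>. usum (sig_rev (Y \<omega>) J) (\<lambda>s. Y \<omega> s i) 0 t (Suc m)) \<in> borel_measurable M"
      unfolding usum_def rsum_def
      by (intro borel_measurable_sum borel_measurable_times borel_measurable_diff IH Mb i up) auto
  qed
qed


lemma vs_append:
  assumes "\<sigma> \<in> variation_sums m X a" "a \<le> b"
  shows "\<sigma> + euclid_norm m (\<lambda>j. X b j - X a j) \<in> variation_sums m X b"
proof -
  obtain k t where kt: "\<sigma> = (\<Sum>i<k. euclid_norm m (\<lambda>j. X (t (Suc i)) j - X (t i) j))"
    "t 0 = 0" "t k = a" "\<forall>i<k. t i \<le> t (Suc i)"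
    using assms(1) unfolding variation_sums_def by blast
  define t' where "t' i = (if i \<le> k then t i else b)" for i
  have "(\<Sum>i<Suc k. euclid_norm m (\<lambda>j. X (t' (Suc i)) j - X (t' i) j)) = \<sigma> + euclid_norm m (\<lambda>j. X b j - X a j)"
    unfolding kt(1) sum.lessThan_Suc using kt(3) by (simp add: t'_def)
  moreover have "t' 0 = 0" "t' (Suc k) = b" "\<forall>i<Suc k. t' i \<le> t' (Suc i)"
    using kt assms(2) by (auto simp: t'_def less_Suc_eq)
  ultimately show ?thesis unfolding variation_sums_def mem_Collect_eq
    by (intro exI[of _ "Suc k"] exI[of _ t'] conjI) auto
qed

lemma euclid_norm_nonneg: "0 \<le> euclid_norm m v"
  unfolding euclid_norm_def by (simp add: sum_nonneg)

lemma vs_nonneg: "\<sigma> \<in> variation_sums m X s \<Longrightarrow> 0 \<le> \<sigma>"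
  unfolding variation_sums_def by (auto intro!: sum_nonneg simp: euclid_norm_nonneg)

lemma vs_elem: "0 \<le> s \<Longrightarrow> euclid_norm m (\<lambda>j. X s j - X 0 j) \<in> variation_sums m X s"
  unfolding variation_sums_def
  by (rule CollectI, rule exI[of _ 1], rule exI[of _ "\<lambda>i. if i = 0 then 0 else s"]) auto

lemma vs_bdd:
  assumes "bounded_variation m X T" "s \<le> T"
  shows "bdd_above (variation_sums m X s)"
proof -
  obtain B where B: "\<And>x. x \<in> variation_sums m X T \<Longrightarrow> x \<le> B"
    using assms(1) unfolding bounded_variation_def bdd_above_def by blast
  have "x \<le> B" if "x \<in> variation_sums m X s" for x
    using B[OF vs_append[OF that assms(2)]] euclid_norm_nonneg[of m] by (smt (verit))
  then show ?thesis unfolding bdd_above_def by blast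
qed

lemma tv_nonneg:
  assumes "bounded_variation m X T" "0 \<le> s" "s \<le> T"
  shows "0 \<le> total_variation m X s"
  unfolding total_variation_def
  using cSup_upper[OF vs_elem[OF assms(2), of m X] vs_bdd[OF assms(1,3)]] vs_nonneg[OF vs_elem[OF assms(2), of m X]] by linarith

lemma tv_super:
  assumes "bounded_variation m X T" "0 \<le> a" "a \<le> b" "b \<le> T"
  shows "total_variation m X a + euclid_norm m (\<lambda>j. X b j - X a j) \<le> total_variation m X b"
proof -
  have "Sup (variation_sums m X a) \<le> Sup (variation_sums m X b) - euclid_norm m (\<lambda>j. X b j - X a j)"
  proof (rule cSup_least)
    show "variation_sums m X a \<noteq> {}" using vs_elem[OF assms(2)] by blast
    fix x assume "x \<in> variation_sums m X a"
    then have "x + euclid_norm m (\<lambda>j. X b j - X a j) \<le> Sup (variation_sums m X b)"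
      by (intro cSup_upper vs_append vs_bdd[OF assms(1,4)] assms(3))
    then show "x \<le> Sup (variation_sums m X b) - euclid_norm m (\<lambda>j. X b j - X a j)" by simp
  qed
  then show ?thesis unfolding total_variation_def by simp
qed

lemma comp_le_norm:
  assumes "j < m"
  shows "\<bar>v j\<bar> \<le> euclid_norm m v"
proof -
  have "(v j)\<^sup>2 \<le> (\<Sum>i<m. (v i)\<^sup>2)" by (rule member_le_sum) (use assms in auto)
  then have "sqrt ((v j)\<^sup>2) \<le> sqrt (\<Sum>i<m. (v i)\<^sup>2)" by (rule real_sqrt_le_mono)
  then show ?thesis unfolding euclid_norm_def by simp
qed

lemma time_aug_domin:
  assumes BV: "bounded_variation (d - 1) X T" and j: "j < d"
  shows "domin (\<lambda>t. time_aug d X t j) (\<lambda>s. total_variation (d - 1) X s + s) 0 T"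
  unfolding domin_def
proof (intro allI impI)
  fix u v :: real assume uv: "0 \<le> u" "u \<le> v" "v \<le> T"
  note sup = tv_super[OF BV uv]
  show "\<bar>time_aug d X v j - time_aug d X u j\<bar> \<le> total_variation (d - 1) X v + v - (total_variation (d - 1) X u + u)"
  proof (cases "j < d - 1")
    case True
    then have "\<bar>X v j - X u j\<bar> \<le> euclid_norm (d - 1) (\<lambda>j. X v j - X u j)"
      using comp_le_norm[of j "d - 1" "\<lambda>j. X v j - X u j"] by simp
    then show ?thesis using True sup uv by (simp add: time_aug_def)
  next
    case False
    then show ?thesis using sup uv euclid_norm_nonneg[of "d - 1" "\<lambda>j. X v j - X u j"] by (simp add: time_aug_def)
  qed
qed

lemma time_aug_cont:
  assumes "\<And>j. j < d - 1 \<Longrightarrow> continuous_on {0..T} (\<lambda>t. X t j)"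
  shows "continuous_on {0..T} (\<lambda>t. time_aug d X t j)"
  using assms by (cases "j < d - 1") (auto simp: time_aug_def continuous_on_id)

lemma sig_term_bound:
  assumes BV: "bounded_variation (d - 1) X T" and T: "0 \<le> T"
    and C: "\<And>j. j < d - 1 \<Longrightarrow> continuous_on {0..T} (\<lambda>t. X t j)"
    and I: "set I \<subseteq> {..<d}" and tv: "total_variation (d - 1) X T < CX"
  shows "\<bar>sig_term (time_aug d X) T I\<bar> \<le> exp (CX + T)"
proof -
  define W where "W s = total_variation (d - 1) X s + s" for s
  have "\<bar>sig_rev (time_aug d X) (rev I) T\<bar> \<le> (W T - W 0) ^ length (rev I) / fact (length (rev I))"
    using sig_props[of T d "time_aug d X" W "rev I"] T time_aug_cont[OF C] time_aug_domin[OF BV] I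
    unfolding W_def by auto
  also have "\<dots> \<le> exp (W T - W 0)"
    by (rule pow_fact_le_exp) (use tv_super[OF BV order_refl T order_refl] euclid_norm_nonneg[of "d - 1" "\<lambda>j. X T j - X 0 j"] T in \<open>auto simp: W_def\<close>)
  also have "\<dots> \<le> exp (CX + T)"
    using tv tv_nonneg[OF BV order_refl T] unfolding W_def by simp
  finally show ?thesis unfolding sig_term_def .
qed


definition Lat :: "'v set \<Rightarrow> nat \<Rightarrow> ('v \<Rightarrow> int) set" where
  "Lat F R = {m \<in> PiE F (\<lambda>_. {- int R..int R}). (\<Sum>v\<in>F. nat \<bar>m v\<bar>) \<le> R}"

lemma geo_int:
  fixes q :: real
  assumes "0 \<le> q" "q < 1"
  shows "(\<Sum>j\<in>{- int R..int R}. q ^ nat \<bar>j\<bar>) = (1 + q - 2 * q ^ Suc R) / (1 - q)"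
proof (induction R)
  case 0
  then show ?case using assms by (simp add: field_simps)
next
  case (Suc R)
  have set: "{- int (Suc R)..int (Suc R)} = insert (- int (Suc R)) (insert (int (Suc R)) {- int R..int R})"
    by auto
  have "(\<Sum>j\<in>{- int (Suc R)..int (Suc R)}. q ^ nat \<bar>j\<bar>) = 2 * q ^ Suc R + (\<Sum>j\<in>{- int R..int R}. q ^ nat \<bar>j\<bar>)"
  proof -
    have e: "nat (int R + 1) = Suc R" "nat (1 + int R) = Suc R" by auto
    show ?thesis unfolding set by (subst sum.insert; simp add: e)+
  qed
  also have "\<dots> = (1 + q - 2 * q ^ Suc (Suc R)) / (1 - q)"
    unfolding Suc using assms by (simp add: field_simps)
  finally show ?case .
qed

lemma geo_int_le:
  fixes q :: real
  assumes "0 \<le> q" "q < 1"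
  shows "(\<Sum>j\<in>{- int R..int R}. q ^ nat \<bar>j\<bar>) \<le> (1 + q) / (1 - q)"
  unfolding geo_int[OF assms] using assms by (intro divide_right_mono) auto

lemma Lat_finite: "finite F \<Longrightarrow> finite (Lat F R)"
  unfolding Lat_def by (intro finite_subset[OF _ finite_PiE[of F "\<lambda>_. {- int R..int R}"]]) auto

lemma lat_card:
  assumes F: "finite F" "F \<noteq> {}"
  shows "real (card (Lat F R)) \<le> (exp 1 * (1 + 2 * (real R + 1) / real (card F))) ^ card F"
proof -
  define D where "D = real (card F)"
  have D: "D > 0" using F by (simp add: D_def card_gt_0_iff)
  define lm where "lm = 1 + D / (real R + 1)"
  have lam: "lm > 1" using D by (simp add: lm_def)
  define q where "q = 1 / lm"
  have q: "0 \<le> q" "q < 1" "q > 0" using lam by (auto simp: q_def)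
  define Box where "Box = PiE F (\<lambda>_. {- int R..int R})"
  have fBox: "finite Box" unfolding Box_def using F by (intro finite_PiE) auto
  have "real (card (Lat F R)) = (\<Sum>m\<in>Lat F R. 1)" by simp
  also have "\<dots> \<le> (\<Sum>m\<in>Lat F R. lm ^ R * q ^ (\<Sum>v\<in>F. nat \<bar>m v\<bar>))"
  proof (rule sum_mono)
    fix m assume "m \<in> Lat F R"
    then have s: "(\<Sum>v\<in>F. nat \<bar>m v\<bar>) \<le> R" unfolding Lat_def by auto
    have "q ^ R \<le> q ^ (\<Sum>v\<in>F. nat \<bar>m v\<bar>)" by (rule power_decreasing[OF s]) (use q in auto)
    moreover have "lm ^ R * q ^ R = 1" unfolding q_def using lam by (simp add: power_divide)
    ultimately show "1 \<le> lm ^ R * q ^ (\<Sum>v\<in>F. nat \<bar>m v\<bar>)"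
      using lam by (metis mult_left_mono zero_le_power order_less_imp_le less_trans zero_less_one)
  qed
  also have "\<dots> \<le> (\<Sum>m\<in>Box. lm ^ R * q ^ (\<Sum>v\<in>F. nat \<bar>m v\<bar>))"
    by (rule sum_mono2[OF fBox]) (use lam q in \<open>auto simp: Lat_def Box_def\<close>)
  also have "\<dots> = lm ^ R * (\<Sum>m\<in>Box. \<Prod>v\<in>F. q ^ nat \<bar>m v\<bar>)"
    by (simp add: sum_distrib_left power_sum)
  also have "(\<Sum>m\<in>Box. \<Prod>v\<in>F. q ^ nat \<bar>m v\<bar>) = (\<Prod>v\<in>F. \<Sum>j\<in>{- int R..int R}. q ^ nat \<bar>j\<bar>)"
    unfolding Box_def by (rule prod_sum_PiE[symmetric]) (use F in auto)
  also have "\<dots> \<le> (\<Prod>v\<in>F. (1 + q) / (1 - q))"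
    by (rule prod_mono) (use geo_int_le[OF q(1,2)] q in \<open>auto intro: sum_nonneg\<close>)
  also have "\<dots> = ((1 + q) / (1 - q)) ^ card F" by simp
  also have "(1 + q) / (1 - q) = 1 + 2 * (real R + 1) / D"
  proof -
    have "(1 + q) / (1 - q) = (lm + 1) / (lm - 1)"
      unfolding q_def using lam by (simp add: field_simps)
    also have "\<dots> = (2 + D / (real R + 1)) / (D / (real R + 1))" unfolding lm_def by simp
    also have "\<dots> = 1 + 2 * (real R + 1) / D"
    proof -
      define a where "a = real R + 1"
      have a: "a > 0" unfolding a_def by simp
      have "2 + D / a = (2 * a + D) / a" using a by (simp add: field_simps)
      then have "(2 + D / a) / (D / a) = ((2 * a + D) / a) / (D / a)" by simp
      also have "\<dots> = (2 * a + D) / D" using a D by simp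
      also have "\<dots> = 1 + 2 * a / D" using D by (simp add: field_simps)
      finally show ?thesis unfolding a_def .
    qed
    finally show ?thesis .
  qed
  finally have c1: "real (card (Lat F R)) \<le> lm ^ R * (1 + 2 * (real R + 1) / D) ^ card F"
    using lam by (simp add: mult_left_mono)
  have "lm ^ R \<le> exp (D / (real R + 1)) ^ R"
    unfolding lm_def by (rule power_mono) (use D in \<open>auto simp: add.commute exp_ge_add_one_self\<close>)
  also have "\<dots> = exp (D * (real R / (real R + 1)))" by (simp add: exp_of_nat_mult[symmetric] field_simps)
  also have "\<dots> \<le> exp D"
  proof -
    have "real R / (real R + 1) \<le> 1" by simp
    then have "D * (real R / (real R + 1)) \<le> D * 1" using D by (intro mult_left_mono) auto
    then show ?thesis by simp
  qed
  also have "exp D = exp 1 ^ card F" unfolding D_def by (simp add: exp_of_nat_mult[symmetric])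
  finally have "lm ^ R \<le> exp 1 ^ card F" .
  moreover have "0 \<le> (1 + 2 * (real R + 1) / D) ^ card F" using D by simp
  ultimately have "lm ^ R * (1 + 2 * (real R + 1) / D) ^ card F \<le> exp 1 ^ card F * (1 + 2 * (real R + 1) / D) ^ card F"
    by (rule mult_right_mono)
  with c1 have "real (card (Lat F R)) \<le> exp 1 ^ card F * (1 + 2 * (real R + 1) / D) ^ card F" by linarith
  then show ?thesis unfolding D_def power_mult_distrib .
qed


lemma PiM_components_indep:
  assumes M: "prob_space M" and I: "I \<noteq> {}"
  shows "prob_space.indep_vars (PiM I (\<lambda>_. M)) (\<lambda>_. M) (\<lambda>i w. w i) I"
proof -
  interpret P: prob_space "PiM I (\<lambda>_. M)" by (rule prob_space_PiM) (use M in auto)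
  have rv: "\<And>i. i \<in> I \<Longrightarrow> (\<lambda>w. w i) \<in> measurable (PiM I (\<lambda>_. M)) M"
    by measurable
  have "distr (PiM I (\<lambda>_. M)) (PiM I (\<lambda>_. M)) (\<lambda>x. \<lambda>i\<in>I. x i) = distr (PiM I (\<lambda>_. M)) (PiM I (\<lambda>_. M)) (\<lambda>x. x)"
    by (rule distr_cong) (auto simp: space_PiM)
  also have "\<dots> = PiM I (\<lambda>_. M)" by (rule distr_id)
  also have "\<dots> = PiM I (\<lambda>i. distr (PiM I (\<lambda>_. M)) M (\<lambda>w. w i))"
    by (rule PiM_cong) (use distr_PiM_component[of I "\<lambda>_. M"] M in auto)
  finally show ?thesis
    by (subst P.indep_vars_iff_distr_eq_PiM'[OF I rv]) auto
qed

lemma hoeffding_prod: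
  fixes W :: "'a \<Rightarrow> real"
  assumes M: "prob_space M" and Wm: "W \<in> borel_measurable M" and AEW: "AE \<omega> in M. \<bar>W \<omega>\<bar> \<le> c"
    and c: "c > 0" and n: "n \<ge> 1" and e: "\<epsilon> \<ge> 0"
  shows "measure (PiM {..<n} (\<lambda>_. M)) {w \<in> space (PiM {..<n} (\<lambda>_. M)). (\<Sum>i<n. W (w i)) \<ge> real n * (\<integral>\<omega>. W \<omega> \<partial>M) + \<epsilon>}
     \<le> exp (-2 * \<epsilon>\<^sup>2 / (real n * (2 * c)\<^sup>2))"
proof -
  define P where "P = PiM {..<n} (\<lambda>_. M)"
  interpret P: prob_space P unfolding P_def by (rule prob_space_PiM) (use M in auto)
  have z: "0 \<in> {..<n}" using n by auto
  then have I: "{..<n} \<noteq> {}" by blast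
  have mi: "(\<lambda>w. w i) \<in> measurable P M" if "i < n" for i
    unfolding P_def by (rule measurable_component_singleton) (use that in simp)
  have dc: "distr P M (\<lambda>w. w i) = M" if "i < n" for i
    unfolding P_def by (rule distr_PiM_component) (use M that in auto)
  have dX: "distr P borel (\<lambda>w. W (w i)) = distr M borel W" if "i < n" for i
  proof -
    have "distr P borel (\<lambda>w. W (w i)) = distr (distr P M (\<lambda>w. w i)) borel W"
      by (subst distr_distr) (auto simp: comp_def intro!: mi Wm that)
    then show ?thesis using dc[OF that] by simp
  qed
  have mu: "(\<integral>w. W (w 0) \<partial>P) = (\<integral>\<omega>. W \<omega> \<partial>M)"
  proof -
    have "(\<integral>w. W (w 0) \<partial>P) = (\<integral>\<omega>. W \<omega> \<partial>distr P M (\<lambda>w. w 0))"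
      by (rule integral_distr[symmetric]) (use mi[of 0] n Wm in auto)
    then show ?thesis using dc[of 0] n by simp
  qed
  interpret H: Hoeffding_ineq_iid P "{..<n}" "\<lambda>i w. W (w i)" "\<lambda>w. W (w 0)" "-c" c "\<integral>w. W (w 0) \<partial>P"
  proof unfold_locales
    show "finite {..<n}" by simp
    show "P.indep_vars (\<lambda>_. borel) (\<lambda>i w. W (w i)) {..<n}"
      by (rule P.indep_vars_compose2[OF PiM_components_indep[OF M I, folded P_def]]) (use Wm in auto)
    show "\<And>i. i \<in> {..<n} \<Longrightarrow> distr P borel (\<lambda>w. W (w i)) = distr P borel (\<lambda>w. W (w 0))"
      using dX n by auto
    show "(\<lambda>w. W (w 0)) \<in> borel_measurable P"
      using measurable_compose[OF mi[of 0] Wm] n by simp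
    have "AE w in P. \<bar>W (w 0)\<bar> \<le> c"
      unfolding P_def by (rule AE_PiM_component[where P="\<lambda>x. \<bar>W x\<bar> \<le> c"]) (use M z AEW in auto)
    then show "AE x in P. W (x 0) \<in> {- c..c}" by (auto simp: abs_le_iff)
  qed simp
  have "P.prob {x \<in> space P. (\<Sum>i\<in>{..<n}. W (x i)) \<ge> real (card {..<n}) * (\<integral>w. W (w 0) \<partial>P) + \<epsilon>}
        \<le> exp (- 2 * \<epsilon>\<^sup>2 / (real (card {..<n}) * (c - - c)\<^sup>2))"
    by (rule H.Hoeffding_ineq_ge[OF e]) (use c I in auto)
  then have "P.prob {x \<in> space P. (\<Sum>i\<in>{..<n}. W (x i)) \<ge> real n * (\<integral>\<omega>. W \<omega> \<partial>M) + \<epsilon>}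
        \<le> exp (- 2 * \<epsilon>\<^sup>2 / (real n * (2 * c)\<^sup>2))"
    unfolding mu by (simp add: power2_eq_square)
  then show ?thesis unfolding P_def by simp
qed


lemma ln1p_exp_lip:
  fixes a b :: real
  assumes "b \<le> a"
  shows "0 \<le> ln (1 + exp a) - ln (1 + exp b)" "ln (1 + exp a) - ln (1 + exp b) \<le> a - b"
proof -
  have "ln (1 + exp b) \<le> ln (1 + exp a)" using assms by (subst ln_le_cancel_iff) (auto intro: add_pos_pos)
  then show "0 \<le> ln (1 + exp a) - ln (1 + exp b)" by simp
  have "1 + exp a \<le> exp (a - b) * (1 + exp b)"
    using assms by (simp add: distrib_left exp_diff[symmetric] exp_add[symmetric] one_le_exp_iff)
  then have "ln (1 + exp a) \<le> ln (exp (a - b) * (1 + exp b))"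
    by (subst ln_le_cancel_iff) (auto intro!: add_pos_pos mult_pos_pos)
  also have "\<dots> = (a - b) + ln (1 + exp b)"
  proof -
    have pos: "0 < 1 + exp b" by (metis add_pos_pos exp_gt_zero zero_less_one)
    have "ln (exp (a - b) * (1 + exp b)) = ln (exp (a - b)) + ln (1 + exp b)"
      using ln_mult_pos[of "exp (a - b)" "1 + exp b"] pos by simp
    then show ?thesis by simp
  qed
  finally show "ln (1 + exp a) - ln (1 + exp b) \<le> a - b" by simp
qed

lemma loss_lip:
  assumes "y \<in> {0, 1}"
  shows "\<bar>logistic_loss y a - logistic_loss y b\<bar> \<le> \<bar>a - b\<bar>"
proof -
  have *: "\<bar>logistic_loss y a - logistic_loss y b\<bar> \<le> a - b" if "b \<le> a" for a b
    using ln1p_exp_lip[OF that] assms unfolding logistic_loss_def by auto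
  show ?thesis
  proof (cases "b \<le> a")
    case True then show ?thesis using *[OF True] by simp
  next
    case False then show ?thesis using *[of a b] *[of b a] by (simp add: abs_minus_commute)
  qed
qed

locale chain =
  fixes M :: "'a measure" and F :: "'v set" and \<phi> :: "'a \<Rightarrow> 'v \<Rightarrow> real" and yy :: "'a \<Rightarrow> real"
    and K :: real and n :: nat
  assumes M: "prob_space M" and finF: "finite F" and neF: "F \<noteq> {}"
    and \<phi>m: "\<And>v. v \<in> F \<Longrightarrow> (\<lambda>\<omega>. \<phi> \<omega> v) \<in> borel_measurable M" and ym: "yy \<in> borel_measurable M"
    and y01: "\<And>\<omega>. \<omega> \<in> space M \<Longrightarrow> yy \<omega> \<in> {0, 1}" and K: "K > 0"
    and AEK: "AE \<omega> in M. \<forall>v\<in>F. \<bar>\<phi> \<omega> v\<bar> \<le> K" and n: "n \<ge> 1"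
begin

definition eta :: "'a \<Rightarrow> ('v \<Rightarrow> real) \<Rightarrow> real" where "eta \<omega> \<theta> = (\<Sum>v\<in>F. \<theta> v * \<phi> \<omega> v)"
definition L where "L \<omega> \<theta> = logistic_loss (yy \<omega>) (eta \<omega> \<theta>)"
definition Rk where "Rk \<theta> = (\<integral>\<omega>. L \<omega> \<theta> \<partial>M)"
definition Zp where "Zp w \<theta> = (1 / real n) * (\<Sum>i<n. L (w i) \<theta>) - Rk \<theta>"
definition nrm :: "('v \<Rightarrow> real) \<Rightarrow> ('v \<Rightarrow> real) \<Rightarrow> real" where "nrm a b = (\<Sum>v\<in>F. \<bar>a v - b v\<bar>)"
definition good where "good \<omega> \<longleftrightarrow> (\<forall>v\<in>F. \<bar>\<phi> \<omega> v\<bar> \<le> K)"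
abbreviation "P \<equiv> PiM {..<n} (\<lambda>_. M)"

lemma nrm_nonneg: "0 \<le> nrm a b" unfolding nrm_def by (simp add: sum_nonneg)

lemma nrm_sym: "nrm a b = nrm b a" unfolding nrm_def by (simp add: abs_minus_commute)

lemma nrm_tri: "nrm a c \<le> nrm a b + nrm b c"
  unfolding nrm_def sum.distrib[symmetric] by (rule sum_mono) auto

lemma eta_lip:
  assumes "good \<omega>"
  shows "\<bar>eta \<omega> a - eta \<omega> b\<bar> \<le> K * nrm a b"
proof -
  have "\<bar>eta \<omega> a - eta \<omega> b\<bar> = \<bar>\<Sum>v\<in>F. (a v - b v) * \<phi> \<omega> v\<bar>"
    unfolding eta_def by (simp add: sum_subtractf[symmetric] left_diff_distrib)
  also have "\<dots> \<le> (\<Sum>v\<in>F. \<bar>(a v - b v) * \<phi> \<omega> v\<bar>)" by (rule sum_abs)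
  also have "\<dots> \<le> (\<Sum>v\<in>F. K * \<bar>a v - b v\<bar>)"
  proof (rule sum_mono)
    fix v assume "v \<in> F"
    then have "\<bar>\<phi> \<omega> v\<bar> \<le> K" using assms unfolding good_def by auto
    then have "\<bar>a v - b v\<bar> * \<bar>\<phi> \<omega> v\<bar> \<le> \<bar>a v - b v\<bar> * K" by (intro mult_left_mono) auto
    then show "\<bar>(a v - b v) * \<phi> \<omega> v\<bar> \<le> K * \<bar>a v - b v\<bar>" by (simp add: abs_mult mult.commute)
  qed
  finally show ?thesis unfolding nrm_def by (simp add: sum_distrib_left)
qed

lemma L_lip:
  assumes "\<omega> \<in> space M" "good \<omega>"
  shows "\<bar>L \<omega> a - L \<omega> b\<bar> \<le> K * nrm a b"
  using loss_lip[OF y01[OF assms(1)]] eta_lip[OF assms(2)] unfolding L_def by (meson order_trans)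

lemma good_meas: "{\<omega> \<in> space M. good \<omega>} \<in> sets M"
  unfolding good_def using \<phi>m finF by measurable

lemma AE_good: "AE \<omega> in M. good \<omega>"
  using AEK unfolding good_def by simp

lemma L_meas: "(\<lambda>\<omega>. L \<omega> \<theta>) \<in> borel_measurable M"
  unfolding L_def logistic_loss_def eta_def using \<phi>m ym by measurable

lemma L_zero: "L \<omega> (\<lambda>_. 0) = ln 2"
  unfolding L_def eta_def logistic_loss_def by simp

lemma L_int: "integrable M (\<lambda>\<omega>. L \<omega> \<theta>)"
proof (rule Bochner_Integration.integrable_bound)
  interpret prob_space M by (rule M)
  show "integrable M (\<lambda>_. ln 2 + K * nrm \<theta> (\<lambda>_. 0))" by simp
  show "(\<lambda>\<omega>. L \<omega> \<theta>) \<in> borel_measurable M" by (rule L_meas)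
  show "AE \<omega> in M. norm (L \<omega> \<theta>) \<le> norm (ln 2 + K * nrm \<theta> (\<lambda>_. 0))"
    using AE_good AE_space
  proof eventually_elim
    case (elim \<omega>)
    have "\<bar>L \<omega> \<theta> - L \<omega> (\<lambda>_. 0)\<bar> \<le> K * nrm \<theta> (\<lambda>_. 0)" by (rule L_lip) (use elim in auto)
    moreover have "0 \<le> K * nrm \<theta> (\<lambda>_. 0)" using K nrm_nonneg by simp
    moreover have l2: "0 \<le> ln (2::real)" by simp
    moreover have "\<bar>L \<omega> \<theta>\<bar> \<le> \<bar>L \<omega> \<theta> - ln 2\<bar> + \<bar>ln 2\<bar>"
      using abs_triangle_ineq[of "L \<omega> \<theta> - ln 2" "ln 2"] by simp
    ultimately show ?case unfolding L_zero real_norm_def by linarith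
  qed
qed

end


context chain begin

lemma R_lip: "\<bar>Rk a - Rk b\<bar> \<le> K * nrm a b"
proof -
  interpret prob_space M by (rule M)
  have "Rk a - Rk b = (\<integral>\<omega>. L \<omega> a - L \<omega> b \<partial>M)"
    unfolding Rk_def using Bochner_Integration.integral_diff[OF L_int[of a] L_int[of b]] by simp
  also have "\<bar>\<dots>\<bar> \<le> (\<integral>\<omega>. \<bar>L \<omega> a - L \<omega> b\<bar> \<partial>M)"
    using integral_norm_bound[of M "\<lambda>\<omega>. L \<omega> a - L \<omega> b"] by simp
  also have "\<dots> \<le> (\<integral>\<omega>. K * nrm a b \<partial>M)"
  proof (rule integral_mono_AE)
    show "integrable M (\<lambda>\<omega>. \<bar>L \<omega> a - L \<omega> b\<bar>)" using L_int by auto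
    show "integrable M (\<lambda>\<omega>. K * nrm a b)" by simp
    show "AE \<omega> in M. \<bar>L \<omega> a - L \<omega> b\<bar> \<le> K * nrm a b"
      using AE_good AE_space by eventually_elim (rule L_lip)
  qed
  also have "\<dots> = K * nrm a b" by (simp add: prob_space)
  finally show ?thesis .
qed

lemma comp_meas: "i < n \<Longrightarrow> (\<lambda>w. w i) \<in> measurable P M"
  by (rule measurable_component_singleton) simp

lemma Lw_meas: "i < n \<Longrightarrow> (\<lambda>w. L (w i) \<theta>) \<in> borel_measurable P"
  by (rule measurable_compose[OF comp_meas L_meas])

lemma Zp_meas: "(\<lambda>w. Zp w \<theta>) \<in> borel_measurable P"
  unfolding Zp_def by (intro borel_measurable_diff borel_measurable_times borel_measurable_sum Lw_meas) auto

lemma pair_bound: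
  assumes d: "\<delta> > 0" and ab: "nrm a b \<le> \<delta>" and t: "t \<ge> 0"
  shows "measure P {w \<in> space P. t \<le> Zp w a - Zp w b} \<le> exp (- (real n * t\<^sup>2) / (2 * K\<^sup>2 * \<delta>\<^sup>2))"
proof -
  interpret prob_space M by (rule M)
  define W where "W \<omega> = L \<omega> a - L \<omega> b" for \<omega>
  have Wm: "W \<in> borel_measurable M" unfolding W_def using L_meas by measurable
  have AEW: "AE \<omega> in M. \<bar>W \<omega>\<bar> \<le> K * \<delta>"
    using AE_good AE_space
  proof eventually_elim
    case (elim \<omega>)
    have "\<bar>W \<omega>\<bar> \<le> K * nrm a b" unfolding W_def by (rule L_lip) (use elim in auto)
    also have "\<dots> \<le> K * \<delta>" using ab K by (intro mult_left_mono) auto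
    finally show ?case .
  qed
  have n0: "real n > 0" using n by simp
  have RW: "Rk a - Rk b = (\<integral>\<omega>. W \<omega> \<partial>M)"
    unfolding Rk_def W_def using Bochner_Integration.integral_diff[OF L_int[of a] L_int[of b]] by simp
  have ev: "{w \<in> space P. t \<le> Zp w a - Zp w b} = {w \<in> space P. (\<Sum>i<n. W (w i)) \<ge> real n * (\<integral>\<omega>. W \<omega> \<partial>M) + real n * t}"
  proof -
    have "t \<le> Zp w a - Zp w b \<longleftrightarrow> (\<Sum>i<n. W (w i)) \<ge> real n * (\<integral>\<omega>. W \<omega> \<partial>M) + real n * t" for w
    proof -
      have "Zp w a - Zp w b = (1 / real n) * (\<Sum>i<n. W (w i)) - (\<integral>\<omega>. W \<omega> \<partial>M)"
        unfolding Zp_def RW[symmetric] by (simp add: W_def sum_subtractf right_diff_distrib)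
      moreover have "t \<le> (1 / real n) * S - E \<longleftrightarrow> (t + E) * real n \<le> S" for S E
      proof -
        have "t \<le> (1 / real n) * S - E \<longleftrightarrow> t + E \<le> S / real n" by auto
        also have "\<dots> \<longleftrightarrow> (t + E) * real n \<le> S" by (rule pos_le_divide_eq[OF n0])
        finally show ?thesis .
      qed
      ultimately have "t \<le> Zp w a - Zp w b \<longleftrightarrow> (t + (\<integral>\<omega>. W \<omega> \<partial>M)) * real n \<le> (\<Sum>i<n. W (w i))"
        by presburger
      then show ?thesis by (simp add: algebra_simps)
    qed
    then show ?thesis by auto
  qed
  have "measure P {w \<in> space P. t \<le> Zp w a - Zp w b} \<le> exp (-2 * (real n * t)\<^sup>2 / (real n * (2 * (K * \<delta>))\<^sup>2))"
    unfolding ev by (rule hoeffding_prod[OF M Wm AEW]) (use K d n t in auto)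
  also have "-2 * (real n * t)\<^sup>2 / (real n * (2 * (K * \<delta>))\<^sup>2) = - (real n * t\<^sup>2) / (2 * K\<^sup>2 * \<delta>\<^sup>2)"
    using n0 K d by (simp add: field_simps power2_eq_square)
  finally show ?thesis .
qed

end


definition rnd :: "real \<Rightarrow> real \<Rightarrow> int" where
  "rnd h y = (if 0 \<le> y then \<lfloor>y / h\<rfloor> else - \<lfloor>- y / h\<rfloor>)"

lemma rnd_props:
  assumes h: "h > 0"
  shows "\<bar>y - h * of_int (rnd h y)\<bar> < h" "real_of_int \<bar>rnd h y\<bar> \<le> \<bar>y\<bar> / h"
proof -
  show "\<bar>y - h * of_int (rnd h y)\<bar> < h"
  proof (cases "0 \<le> y")
    case True
    have f1: "of_int \<lfloor>y / h\<rfloor> \<le> y / h" and f2: "y / h < of_int \<lfloor>y / h\<rfloor> + 1" by linarith+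
    have "h * of_int \<lfloor>y / h\<rfloor> \<le> y" using mult_left_mono[OF f1, of h] h by simp
    moreover have "y < h * of_int \<lfloor>y / h\<rfloor> + h" using mult_strict_left_mono[OF f2 h] h by (simp add: algebra_simps)
    ultimately have "h * of_int \<lfloor>y / h\<rfloor> \<le> y" "y < h * of_int \<lfloor>y / h\<rfloor> + h" by auto
    then show ?thesis using True by (simp add: rnd_def)
  next
    case False
    have f1: "of_int \<lfloor>- y / h\<rfloor> \<le> - y / h" and f2: "- y / h < of_int \<lfloor>- y / h\<rfloor> + 1" by linarith+
    have "h * of_int \<lfloor>- y / h\<rfloor> \<le> - y" using mult_left_mono[OF f1, of h] h by simp
    moreover have "- y < h * of_int \<lfloor>- y / h\<rfloor> + h" using mult_strict_left_mono[OF f2 h] h by (simp add: algebra_simps)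
    ultimately have "h * of_int \<lfloor>- y / h\<rfloor> \<le> - y" "- y < h * of_int \<lfloor>- y / h\<rfloor> + h" by auto
    then show ?thesis using False by (simp add: rnd_def)
  qed
  show "real_of_int \<bar>rnd h y\<bar> \<le> \<bar>y\<bar> / h"
  proof (cases "0 \<le> y")
    case True
    then have "0 \<le> \<lfloor>y / h\<rfloor>" using h by simp
    then show ?thesis using True by (simp add: rnd_def)
  next
    case False
    have "0 \<le> - y / h" using h False by (intro divide_nonneg_pos) auto
    then have "0 \<le> \<lfloor>- y / h\<rfloor>" by simp
    then show ?thesis using False by (simp add: rnd_def)
  qed
qed

context chain begin

definition Dn :: real where "Dn = real (card F)"
definition eps :: "real \<Rightarrow> nat \<Rightarrow> real" where "eps r k = 2 * r / 2 ^ k"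
definition hh :: "real \<Rightarrow> nat \<Rightarrow> real" where "hh r k = eps r k / Dn"
definition grid :: "real \<Rightarrow> nat \<Rightarrow> ('v \<Rightarrow> real) \<Rightarrow> ('v \<Rightarrow> real)" where "grid r k \<theta> = (\<lambda>v. if v \<in> F then hh r k * of_int (rnd (hh r k) (\<theta> v)) else 0)"
definition pr :: "real \<Rightarrow> ('v \<Rightarrow> real) \<Rightarrow> nat \<Rightarrow> ('v \<Rightarrow> real) \<Rightarrow> ('v \<Rightarrow> real)" where "pr r \<theta>0 k \<theta> = (if k = 0 then \<theta>0 else grid r k \<theta>)"
definition Bl :: "real \<Rightarrow> ('v \<Rightarrow> real) set" where "Bl r = {\<theta>. (\<forall>v. v \<notin> F \<longrightarrow> \<theta> v = 0) \<and> (\<Sum>v\<in>F. \<bar>\<theta> v\<bar>) \<le> r}"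
definition RR :: "real \<Rightarrow> nat \<Rightarrow> nat" where "RR r k = nat \<lfloor>r / hh r k\<rfloor>"
definition emb :: "real \<Rightarrow> ('v \<Rightarrow> int) \<Rightarrow> ('v \<Rightarrow> real)" where "emb h m = (\<lambda>v. if v \<in> F then h * of_int (m v) else 0)"
definition Net :: "real \<Rightarrow> nat \<Rightarrow> ('v \<Rightarrow> real) set" where "Net r k = emb (hh r k) ` Lat F (RR r k)"
definition Net' :: "real \<Rightarrow> ('v \<Rightarrow> real) \<Rightarrow> nat \<Rightarrow> ('v \<Rightarrow> real) set" where "Net' r \<theta>0 k = (if k = 0 then {\<theta>0} else Net r k)"
definition Pairs :: "real \<Rightarrow> ('v \<Rightarrow> real) \<Rightarrow> nat \<Rightarrow> (('v \<Rightarrow> real) \<times> ('v \<Rightarrow> real)) set" where "Pairs r \<theta>0 k = (\<lambda>\<theta>. (pr r \<theta>0 k \<theta>, pr r \<theta>0 (k - 1) \<theta>)) ` Bl r"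

lemma Dn_pos: "Dn > 0" using finF neF by (simp add: Dn_def card_gt_0_iff)
lemma Dn_ge1: "Dn \<ge> 1" using finF neF by (simp add: Dn_def Suc_le_eq card_gt_0_iff)

lemma hh_pos: "r > 0 \<Longrightarrow> hh r k > 0"
  unfolding hh_def eps_def using Dn_pos by simp

lemma grid_close:
  assumes "r > 0"
  shows "nrm \<theta> (grid r k \<theta>) \<le> eps r k"
proof -
  have "nrm \<theta> (grid r k \<theta>) \<le> (\<Sum>v\<in>F. hh r k)"
    unfolding nrm_def grid_def
    by (rule sum_mono) (use rnd_props(1)[OF hh_pos[OF assms]] in \<open>auto intro: less_imp_le\<close>)
  also have "\<dots> = eps r k" unfolding hh_def Dn_def using Dn_pos unfolding Dn_def by simp
  finally show ?thesis .
qed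

lemma grid_in_Net:
  assumes r: "r > 0" and th: "\<theta> \<in> Bl r"
  shows "grid r k \<theta> \<in> Net r k"
proof -
  define h where "h = hh r k"
  have h: "h > 0" unfolding h_def by (rule hh_pos[OF r])
  define m where "m = restrict (\<lambda>v. rnd h (\<theta> v)) F"
  have s: "(\<Sum>v\<in>F. real_of_int \<bar>m v\<bar>) \<le> r / h"
  proof -
    have "(\<Sum>v\<in>F. real_of_int \<bar>m v\<bar>) \<le> (\<Sum>v\<in>F. \<bar>\<theta> v\<bar> / h)"
      by (rule sum_mono) (use rnd_props(2)[OF h] in \<open>auto simp: m_def\<close>)
    also have "\<dots> = (\<Sum>v\<in>F. \<bar>\<theta> v\<bar>) / h" by (simp add: sum_divide_distrib)
    also have "\<dots> \<le> r / h" using th h unfolding Bl_def by (auto intro: divide_right_mono)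
    finally show ?thesis .
  qed
  have nat_eq: "real (\<Sum>v\<in>F. nat \<bar>m v\<bar>) = (\<Sum>v\<in>F. real_of_int \<bar>m v\<bar>)"
    by (simp add: of_nat_sum)
  have sR: "(\<Sum>v\<in>F. nat \<bar>m v\<bar>) \<le> RR r k"
    unfolding RR_def h_def[symmetric] using s nat_eq by (simp add: le_nat_floor)
  have mR: "m v \<in> {- int (RR r k)..int (RR r k)}" if "v \<in> F" for v
  proof -
    have "nat \<bar>m v\<bar> \<le> (\<Sum>v\<in>F. nat \<bar>m v\<bar>)" by (rule member_le_sum) (use that finF in auto)
    then have "nat \<bar>m v\<bar> \<le> RR r k" using sR by linarith
    then show ?thesis by auto
  qed
  have "m \<in> Lat F (RR r k)" unfolding Lat_def using mR sR by (auto simp: m_def)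
  moreover have "grid r k \<theta> = emb (hh r k) m"
    unfolding grid_def emb_def m_def h_def by auto
  ultimately show ?thesis unfolding Net_def by blast
qed

lemma Net_finite: "finite (Net r k)"
  unfolding Net_def by (rule finite_imageI[OF Lat_finite[OF finF]])

lemma Net'_finite: "finite (Net' r \<theta>0 k)"
  unfolding Net'_def using Net_finite by auto

lemma exp_k_bound:
  assumes "k \<ge> 1"
  shows "3 + 2 ^ k \<le> exp (real k + 2)"
proof -
  have e1: "2 \<le> exp (1::real)" using exp_ge_add_one_self[of 1] by simp
  have e2: "3 \<le> exp (2::real)" using exp_ge_add_one_self[of 2] by simp
  have "(2::real) ^ k \<le> exp 1 ^ k" by (rule power_mono[OF e1]) simp
  also have "\<dots> = exp (real k)" by (simp add: exp_of_nat_mult[symmetric])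
  finally have a: "(2::real) ^ k \<le> exp (real k)" .
  have b: "(2::real) ^ k \<ge> 2" using assms by (metis power_one_right power_increasing one_le_numeral)
  have "3 + 2 ^ k \<le> 3 * (2::real) ^ k" using b by simp
  also have "\<dots> \<le> exp 2 * exp (real k)" using a e2 by (intro mult_mono) auto
  also have "\<dots> = exp (real k + 2)" by (simp add: exp_add)
  finally show ?thesis .
qed

lemma Net_card:
  assumes r: "r > 0" and k: "k \<ge> 1"
  shows "real (card (Net r k)) \<le> exp (Dn * (real k + 3))"
proof -
  have "real (card (Net r k)) \<le> real (card (Lat F (RR r k)))"
    unfolding Net_def by (simp add: card_image_le Lat_finite[OF finF])
  also have "\<dots> \<le> (exp 1 * (1 + 2 * (real (RR r k) + 1) / Dn)) ^ card F"
    unfolding Dn_def by (rule lat_card[OF finF neF])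
  also have "\<dots> \<le> (exp 1 * exp (real k + 2)) ^ card F"
  proof (rule power_mono)
    have "real (RR r k) \<le> r / hh r k"
    proof -
      have "0 \<le> r / hh r k" using r hh_pos[OF r, of k] by simp
      then show ?thesis unfolding RR_def by linarith
    qed
    also have "r / hh r k = Dn * 2 ^ k / 2"
      unfolding hh_def eps_def using r Dn_pos by (simp add: field_simps)
    finally have "2 * (real (RR r k) + 1) / Dn \<le> 2 * (Dn * 2 ^ k / 2 + 1) / Dn"
      using Dn_pos by (intro divide_right_mono mult_left_mono) auto
    also have "\<dots> = 2 ^ k + 2 / Dn" using Dn_pos by (simp add: field_simps)
    also have "\<dots> \<le> 2 ^ k + 2" using Dn_ge1 by (simp add: divide_le_eq)
    finally have "1 + 2 * (real (RR r k) + 1) / Dn \<le> exp (real k + 2)" using exp_k_bound[OF k] by linarith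
    then show "exp 1 * (1 + 2 * (real (RR r k) + 1) / Dn) \<le> exp 1 * exp (real k + 2)" by simp
    show "0 \<le> exp 1 * (1 + 2 * (real (RR r k) + 1) / Dn)" using Dn_pos by simp
  qed
  also have "\<dots> = exp (Dn * (real k + 3))"
    unfolding Dn_def by (simp add: exp_add[symmetric] exp_of_nat_mult[symmetric] algebra_simps)
  finally show ?thesis .
qed

lemma Net'_card:
  assumes r: "r > 0"
  shows "real (card (Net' r \<theta>0 k)) \<le> exp (Dn * (real k + 3))"
proof (cases "k = 0")
  case True
  have "1 \<le> exp (Dn * 3)" using Dn_pos by simp
  then show ?thesis using True by (simp add: Net'_def)
next
  case False
  then show ?thesis using Net_card[OF r] by (simp add: Net'_def)
qed

lemma Bl_nrm: "\<theta> \<in> Bl r \<Longrightarrow> \<theta>' \<in> Bl r \<Longrightarrow> nrm \<theta> \<theta>' \<le> 2 * r"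
  unfolding Bl_def nrm_def
proof -
  assume a: "\<theta> \<in> {\<theta>. (\<forall>v. v \<notin> F \<longrightarrow> \<theta> v = 0) \<and> (\<Sum>v\<in>F. \<bar>\<theta> v\<bar>) \<le> r}"
     and b: "\<theta>' \<in> {\<theta>. (\<forall>v. v \<notin> F \<longrightarrow> \<theta> v = 0) \<and> (\<Sum>v\<in>F. \<bar>\<theta> v\<bar>) \<le> r}"
  have "(\<Sum>v\<in>F. \<bar>\<theta> v - \<theta>' v\<bar>) \<le> (\<Sum>v\<in>F. \<bar>\<theta> v\<bar> + \<bar>\<theta>' v\<bar>)" by (rule sum_mono) auto
  also have "\<dots> \<le> 2 * r" using a b by (simp add: sum.distrib)
  finally show "(\<Sum>v\<in>F. \<bar>\<theta> v - \<theta>' v\<bar>) \<le> 2 * r" .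
qed

lemma pr_close:
  assumes r: "r > 0" and th: "\<theta> \<in> Bl r" and th0: "\<theta>0 \<in> Bl r"
  shows "nrm \<theta> (pr r \<theta>0 k \<theta>) \<le> eps r k"
proof (cases "k = 0")
  case True
  then show ?thesis using Bl_nrm[OF th th0] by (simp add: pr_def eps_def)
next
  case False
  then show ?thesis using grid_close[OF r] by (simp add: pr_def)
qed

lemma pr_pair_close:
  assumes r: "r > 0" and th: "\<theta> \<in> Bl r" and th0: "\<theta>0 \<in> Bl r"
  shows "nrm (pr r \<theta>0 (Suc k) \<theta>) (pr r \<theta>0 k \<theta>) \<le> 3 * eps r (Suc k)"
proof -
  have "nrm (pr r \<theta>0 (Suc k) \<theta>) (pr r \<theta>0 k \<theta>) \<le> nrm (pr r \<theta>0 (Suc k) \<theta>) \<theta> + nrm \<theta> (pr r \<theta>0 k \<theta>)"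
    by (rule nrm_tri)
  also have "\<dots> \<le> eps r (Suc k) + eps r k"
    using pr_close[OF assms, of "Suc k"] pr_close[OF assms, of k] by (simp add: nrm_sym)
  also have "eps r k = 2 * eps r (Suc k)" unfolding eps_def by simp
  finally show ?thesis by simp
qed

lemma pr_in_Net': "r > 0 \<Longrightarrow> \<theta> \<in> Bl r \<Longrightarrow> pr r \<theta>0 k \<theta> \<in> Net' r \<theta>0 k"
  using grid_in_Net by (simp add: pr_def Net'_def)

lemma Pairs_sub: "r > 0 \<Longrightarrow> Pairs r \<theta>0 k \<subseteq> Net' r \<theta>0 k \<times> Net' r \<theta>0 (k - 1)"
  unfolding Pairs_def using pr_in_Net' by auto

lemma Pairs_finite: "r > 0 \<Longrightarrow> finite (Pairs r \<theta>0 k)"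
  by (rule finite_subset[OF Pairs_sub]) (auto intro!: finite_cartesian_product Net'_finite)

lemma Pairs_card:
  assumes r: "r > 0"
  shows "real (card (Pairs r \<theta>0 (Suc k))) \<le> exp (Dn * (2 * real k + 7))"
proof -
  have "card (Pairs r \<theta>0 (Suc k)) \<le> card (Net' r \<theta>0 (Suc k) \<times> Net' r \<theta>0 k)"
    using Pairs_sub[OF r, of \<theta>0 "Suc k"] by (intro card_mono) (auto simp: Net'_finite)
  also have "\<dots> = card (Net' r \<theta>0 (Suc k)) * card (Net' r \<theta>0 k)" by (rule card_cartesian_product)
  finally have "real (card (Pairs r \<theta>0 (Suc k))) \<le> real (card (Net' r \<theta>0 (Suc k))) * real (card (Net' r \<theta>0 k))"
    by (metis of_nat_le_iff of_nat_mult)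
  also have "\<dots> \<le> exp (Dn * (real (Suc k) + 3)) * exp (Dn * (real k + 3))"
    by (intro mult_mono Net'_card r) auto
  also have "\<dots> = exp (Dn * (2 * real k + 7))" by (simp add: exp_add[symmetric] algebra_simps)
  finally show ?thesis .
qed

end


lemma geo_half: "(\<Sum>k<L. (1/2::real) ^ Suc k) = 1 - (1/2) ^ L"
  by (induction L) (auto simp: field_simps)

lemma geo_half_le: "(\<Sum>k<L. (1/2::real) ^ Suc k) \<le> 1"
  unfolding geo_half by simp

lemma geo_lin: "(\<Sum>k<L. (real k + 2) / 2 ^ Suc k) = 3 - (real L + 3) / 2 ^ L"
proof (induction L)
  case 0 then show ?case by simp
next
  case (Suc L)
  show ?case unfolding sum.lessThan_Suc Suc by (simp add: field_simps)
qed

lemma geo_lin_le: "(\<Sum>k<L. (real k + 2) / 2 ^ Suc k) \<le> 3"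
  unfolding geo_lin by simp

context chain begin

definition del :: "real \<Rightarrow> nat \<Rightarrow> real" where "del r k = 3 * eps r k"
definition Lam :: "nat \<Rightarrow> real" where "Lam k = 5 * Dn * (real k + 1)"
definition ta :: "real \<Rightarrow> nat \<Rightarrow> real" where "ta r k = K * del r k * sqrt (2 * Lam k / real n)"
definition tb :: "real \<Rightarrow> real \<Rightarrow> nat \<Rightarrow> real" where "tb r x k = x * del r k / (8 * r)"
definition tt :: "real \<Rightarrow> real \<Rightarrow> nat \<Rightarrow> real" where "tt r x k = ta r k + tb r x k"
definition Qx :: "real \<Rightarrow> real \<Rightarrow> real" where "Qx r x = real n * x\<^sup>2 / (128 * K\<^sup>2 * r\<^sup>2)"

lemma n_pos: "real n > 0" using n by simp

lemma del_pos: "r > 0 \<Longrightarrow> del r k > 0" unfolding del_def eps_def by simp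

lemma Lam_pos: "Lam k > 0" unfolding Lam_def using Dn_pos by simp

lemma ta_nonneg: "r > 0 \<Longrightarrow> 0 \<le> ta r k"
  unfolding ta_def using K del_pos[of r k] Lam_pos[of k] n_pos by simp

lemma tb_nonneg: "r > 0 \<Longrightarrow> x \<ge> 0 \<Longrightarrow> 0 \<le> tb r x k"
  unfolding tb_def using del_pos[of r k] by simp

lemma thr_prob:
  assumes r: "r > 0" and x: "x \<ge> 0" and ab: "nrm a b \<le> del r k"
  shows "measure P {w \<in> space P. tt r x k \<le> Zp w a - Zp w b} \<le> exp (- Lam k) * exp (- Qx r x)"
proof -
  define \<delta> where "\<delta> = del r k"
  have d: "\<delta> > 0" unfolding \<delta>_def by (rule del_pos[OF r])
  have t0: "0 \<le> tt r x k" unfolding tt_def using ta_nonneg[OF r] tb_nonneg[OF r x] by (simp add: add_nonneg_nonneg)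
  have "measure P {w \<in> space P. tt r x k \<le> Zp w a - Zp w b} \<le> exp (- (real n * (tt r x k)\<^sup>2) / (2 * K\<^sup>2 * \<delta>\<^sup>2))"
    by (rule pair_bound[OF d _ t0]) (use ab in \<open>simp add: \<delta>_def\<close>)
  also have "\<dots> \<le> exp (- Lam k - Qx r x)"
  proof (subst exp_le_cancel_iff)
    define c where "c = 2 * K\<^sup>2 * \<delta>\<^sup>2"
    have c: "c > 0" unfolding c_def using K d by simp
    have sq: "(tt r x k)\<^sup>2 \<ge> (ta r k)\<^sup>2 + (tb r x k)\<^sup>2"
      unfolding tt_def power2_sum using ta_nonneg[OF r, of k] tb_nonneg[OF r x, of k] by simp
    have "real n * (ta r k)\<^sup>2 / c = Lam k"
    proof -
      have "(sqrt (2 * Lam k / real n))\<^sup>2 = 2 * Lam k / real n"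
        using Lam_pos[of k] n_pos by (intro real_sqrt_pow2) simp
      then have "(ta r k)\<^sup>2 = K\<^sup>2 * \<delta>\<^sup>2 * (2 * Lam k / real n)"
        unfolding ta_def \<delta>_def[symmetric] by (simp add: power_mult_distrib)
      then show ?thesis unfolding c_def using n_pos K d by (simp add: field_simps)
    qed
    moreover have "real n * (tb r x k)\<^sup>2 / c = Qx r x"
      unfolding c_def tb_def Qx_def \<delta>_def[symmetric] using n_pos K d r by (simp add: field_simps power2_eq_square)
    moreover have "real n * (ta r k)\<^sup>2 / c + real n * (tb r x k)\<^sup>2 / c \<le> real n * (tt r x k)\<^sup>2 / c"
    proof -
      have "real n * ((ta r k)\<^sup>2 + (tb r x k)\<^sup>2) \<le> real n * (tt r x k)\<^sup>2"
        using sq n_pos by (intro mult_left_mono) auto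
      then show ?thesis using c by (simp add: add_divide_distrib[symmetric] distrib_left divide_right_mono)
    qed
    ultimately show "- (real n * (tt r x k)\<^sup>2) / (2 * K\<^sup>2 * \<delta>\<^sup>2) \<le> - Lam k - Qx r x"
      unfolding c_def by simp
  qed
  also have "\<dots> = exp (- Lam k) * exp (- Qx r x)" by (simp add: exp_add[symmetric])
  finally show ?thesis .
qed

lemma pairs_sum:
  assumes r: "r > 0"
  shows "(\<Sum>p\<in>Pairs r \<theta>0 (Suc k). exp (- Lam (Suc k)) * exp (- Qx r x)) \<le> (1/2) ^ Suc k * exp (- Qx r x)"
proof -
  have "(\<Sum>p\<in>Pairs r \<theta>0 (Suc k). exp (- Lam (Suc k)) * exp (- Qx r x))
      = real (card (Pairs r \<theta>0 (Suc k))) * exp (- Lam (Suc k)) * exp (- Qx r x)" by simp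
  also have "\<dots> \<le> exp (Dn * (2 * real k + 7)) * exp (- Lam (Suc k)) * exp (- Qx r x)"
    by (intro mult_right_mono Pairs_card[OF r]) auto
  also have "exp (Dn * (2 * real k + 7)) * exp (- Lam (Suc k)) = exp (- (Dn * (3 * real k + 3)))"
    unfolding Lam_def by (simp add: exp_add[symmetric] algebra_simps)
  also have "\<dots> \<le> exp (- (real k + 1))"
  proof -
    have "real k + 1 \<le> 1 * (3 * real k + 3)" by simp
    also have "\<dots> \<le> Dn * (3 * real k + 3)" using Dn_ge1 by (intro mult_right_mono) auto
    finally show ?thesis by simp
  qed
  also have "exp (- (real k + 1)) = exp (-1) ^ Suc k"
  proof -
    have "exp (-1) ^ Suc k = exp (real (Suc k) * (-1))" by (rule exp_of_nat_mult[symmetric])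
    then show ?thesis by simp
  qed
  also have "\<dots> \<le> (1/2) ^ Suc k"
  proof (rule power_mono)
    have "2 \<le> exp (1::real)" using exp_ge_add_one_self[of 1] by simp
    then show "exp (-1::real) \<le> 1/2" by (simp add: exp_minus field_simps)
  qed simp
  finally show ?thesis by (simp add: mult_right_mono)
qed

lemma ta_bound: "r > 0 \<Longrightarrow> ta r (Suc k) \<le> 24 * K * r * sqrt (Dn / real n) * ((real k + 2) / 2 ^ Suc k)"
proof -
  assume r: "r > 0"
  have eq: "2 * Lam (Suc k) / real n = (10 * (real k + 2)) * (Dn / real n)"
    unfolding Lam_def by (simp add: field_simps)
  have "sqrt (2 * Lam (Suc k) / real n) = sqrt (10 * (real k + 2)) * sqrt (Dn / real n)"
    unfolding eq by (rule real_sqrt_mult)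
  also have "\<dots> \<le> (4 * (real k + 2)) * sqrt (Dn / real n)"
  proof (rule mult_right_mono)
    have "10 * (real k + 2) \<le> (4 * (real k + 2))\<^sup>2" by (simp add: power2_eq_square algebra_simps)
    then have "sqrt (10 * (real k + 2)) \<le> sqrt ((4 * (real k + 2))\<^sup>2)" by (rule real_sqrt_le_mono)
    then show "sqrt (10 * (real k + 2)) \<le> 4 * (real k + 2)" by simp
  qed (use Dn_pos n_pos in simp)
  finally have s: "sqrt (2 * Lam (Suc k) / real n) \<le> 4 * (real k + 2) * sqrt (Dn / real n)" .
  have "ta r (Suc k) = K * del r (Suc k) * sqrt (2 * Lam (Suc k) / real n)" by (simp add: ta_def)
  also have "\<dots> \<le> K * del r (Suc k) * (4 * (real k + 2) * sqrt (Dn / real n))"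
    using K del_pos[OF r, of "Suc k"] s by (intro mult_left_mono) auto
  also have "\<dots> = 24 * K * r * sqrt (Dn / real n) * ((real k + 2) / 2 ^ Suc k)"
    unfolding del_def eps_def by (simp add: field_simps)
  finally show ?thesis .
qed

lemma ta_sum: "r > 0 \<Longrightarrow> (\<Sum>k<NL. ta r (Suc k)) \<le> 72 * K * r * sqrt (Dn / real n)"
proof -
  assume r: "r > 0"
  have "(\<Sum>k<NL. ta r (Suc k)) \<le> (\<Sum>k<NL. 24 * K * r * sqrt (Dn / real n) * ((real k + 2) / 2 ^ Suc k))"
    by (rule sum_mono) (rule ta_bound[OF r])
  also have "\<dots> = 24 * K * r * sqrt (Dn / real n) * (\<Sum>k<NL. (real k + 2) / 2 ^ Suc k)"
    by (simp add: sum_distrib_left)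
  also have "\<dots> \<le> 24 * K * r * sqrt (Dn / real n) * 3"
    using K r Dn_pos n_pos by (intro mult_left_mono geo_lin_le) auto
  finally show ?thesis by simp
qed

lemma tb_sum: "r > 0 \<Longrightarrow> x \<ge> 0 \<Longrightarrow> (\<Sum>k<NL. tb r x (Suc k)) \<le> 3 * x / 4"
proof -
  assume r: "r > 0" and x: "x \<ge> 0"
  have "(\<Sum>k<NL. tb r x (Suc k)) = (3 * x / 4) * (\<Sum>k<NL. (1/2::real) ^ Suc k)"
    unfolding sum_distrib_left tb_def del_def eps_def using r by (intro sum.cong) (auto simp: field_simps)
  also have "\<dots> \<le> (3 * x / 4) * 1" using x by (intro mult_left_mono geo_half_le) auto
  finally show ?thesis by simp
qed

lemma space_P_good: "w \<in> space P \<Longrightarrow> i < n \<Longrightarrow> w i \<in> space M"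
  by (auto simp: space_PiM)

lemma Zp_lip:
  assumes w: "w \<in> space P" and g: "\<forall>i<n. good (w i)"
  shows "\<bar>Zp w a - Zp w b\<bar> \<le> 2 * K * nrm a b"
proof -
  have "\<bar>(\<Sum>i<n. L (w i) a) - (\<Sum>i<n. L (w i) b)\<bar> \<le> (\<Sum>i<n. \<bar>L (w i) a - L (w i) b\<bar>)"
    unfolding sum_subtractf[symmetric] by (rule sum_abs)
  also have "\<dots> \<le> (\<Sum>i<n. K * nrm a b)"
    by (rule sum_mono) (use L_lip space_P_good[OF w] g in auto)
  also have "\<dots> = real n * (K * nrm a b)" by simp
  finally have e: "\<bar>(1 / real n) * (\<Sum>i<n. L (w i) a) - (1 / real n) * (\<Sum>i<n. L (w i) b)\<bar> \<le> K * nrm a b"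
    using n_pos by (simp add: right_diff_distrib[symmetric] abs_mult field_simps)
  have "Zp w a - Zp w b = ((1 / real n) * (\<Sum>i<n. L (w i) a) - (1 / real n) * (\<Sum>i<n. L (w i) b)) - (Rk a - Rk b)"
    unfolding Zp_def by simp
  then have "\<bar>Zp w a - Zp w b\<bar> \<le> K * nrm a b + K * nrm a b" using e R_lip[of a b] by linarith
  then show ?thesis by simp
qed

lemma chain_det:
  assumes r: "r > 0" and th0: "\<theta>0 \<in> Bl r" and w: "w \<in> space P" and g: "\<forall>i<n. good (w i)"
    and pairs: "\<forall>k<NL. \<forall>p\<in>Pairs r \<theta>0 (Suc k). Zp w (fst p) - Zp w (snd p) < tt r x (Suc k)"
    and th: "\<theta> \<in> Bl r"
  shows "Zp w \<theta> - Zp w \<theta>0 \<le> (\<Sum>k<NL. tt r x (Suc k)) + 2 * K * eps r NL"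
proof -
  define f where "f k = Zp w (pr r \<theta>0 k \<theta>)" for k
  have tel: "(\<Sum>k<NL. f (Suc k) - f k) = f NL - f 0" by (rule sum_lessThan_telescope)
  have f0: "f 0 = Zp w \<theta>0" unfolding f_def pr_def by simp
  have "f (Suc k) - f k < tt r x (Suc k)" if "k < NL" for k
  proof -
    have "(pr r \<theta>0 (Suc k) \<theta>, pr r \<theta>0 k \<theta>) \<in> Pairs r \<theta>0 (Suc k)"
      unfolding Pairs_def using th by force
    then show ?thesis using pairs that unfolding f_def by fastforce
  qed
  then have s: "(\<Sum>k<NL. f (Suc k) - f k) \<le> (\<Sum>k<NL. tt r x (Suc k))"
    by (intro sum_mono less_imp_le) auto
  have "Zp w \<theta> - f NL \<le> 2 * K * nrm \<theta> (pr r \<theta>0 NL \<theta>)"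
    using Zp_lip[OF w g, of \<theta> "pr r \<theta>0 NL \<theta>"] unfolding f_def by linarith
  also have "\<dots> \<le> 2 * K * eps r NL"
    using pr_close[OF r th th0, of NL] K by (intro mult_left_mono) auto
  finally show ?thesis using tel s f0 by linarith
qed

lemma AE_all_good: "AE w in P. \<forall>i<n. good (w i)"
proof -
  have "\<forall>i\<in>{..<n}. AE w in P. good (w i)"
  proof
    fix i assume "i \<in> {..<n}"
    then show "AE w in P. good (w i)"
      by (intro AE_PiM_component[where P=good]) (use M AE_good in auto)
  qed
  then have "AE w in P. \<forall>i\<in>{..<n}. good (w i)" by (rule eventually_ball_finite[rotated]) simp
  then show ?thesis by (rule eventually_mono) auto
qed

end


context chain begin

lemma Ev_sets: "{w \<in> space P. c \<le> Zp w a - Zp w b} \<in> sets P"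
proof -
  have "(\<lambda>w. Zp w a - Zp w b) \<in> borel_measurable P" using Zp_meas by (intro borel_measurable_diff)
  then show ?thesis by measurable
qed

theorem chain_main:
  assumes r: "r > 0" and x: "x > 0" and th0: "\<theta>0 \<in> Bl r" and Dp: "Dn \<le> Dp"
  shows "measure P {w \<in> space P. (SUP \<theta>\<in>Bl r. Zp w \<theta>) \<ge> 108 * (2 * K) * r * sqrt (Dp / real n) * sqrt pi + Zp w \<theta>0 + x}
         \<le> 36 * exp (- (x\<^sup>2 * real n) / (144 * (2 * K)\<^sup>2 * r\<^sup>2))"
proof -
  interpret PP: prob_space P by (rule prob_space_PiM) (use M in auto)
  define A where "A = 108 * (2 * K) * r * sqrt (Dp / real n) * sqrt pi"
  define E where "E = {w \<in> space P. (SUP \<theta>\<in>Bl r. Zp w \<theta>) \<ge> A + Zp w \<theta>0 + x}"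
  obtain NL :: nat where NL: "16 * K * r / x < 2 ^ NL" using real_arch_pow[of 2 "16 * K * r / x"] by auto
  have rem: "2 * K * eps r NL < x / 4"
  proof -
    have "16 * K * r < x * 2 ^ NL" using NL x by (simp add: field_simps)
    then show ?thesis unfolding eps_def by (simp add: field_simps)
  qed
  have A: "72 * K * r * sqrt (Dn / real n) \<le> A"
  proof -
    have s1: "sqrt (Dn / real n) \<le> sqrt (Dp / real n)"
      using Dp n_pos by (intro real_sqrt_le_mono divide_right_mono) auto
    have s2: "1 \<le> sqrt pi" using pi_gt3 by simp
    have kr: "0 \<le> K * r" using K r by simp
    have "72 * K * r * sqrt (Dn / real n) = (72 * (K * r)) * sqrt (Dn / real n)" by simp
    also have "\<dots> \<le> (216 * (K * r)) * sqrt (Dp / real n)"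
      by (rule mult_mono) (use kr s1 Dn_pos n_pos in auto)
    also have "\<dots> = 216 * K * r * sqrt (Dp / real n) * 1" by simp
    finally have "72 * K * r * sqrt (Dn / real n) \<le> 216 * K * r * sqrt (Dp / real n) * 1" .
    also have "\<dots> \<le> 216 * K * r * sqrt (Dp / real n) * sqrt pi"
      using s2 K r Dp Dn_pos n_pos by (intro mult_left_mono) auto
    finally show ?thesis unfolding A_def by simp
  qed
  define Ev where "Ev k p = {w \<in> space P. tt r x (Suc k) \<le> Zp w (fst p) - Zp w (snd p)}" for k p
  define U where "U = (\<Union>k\<in>{..<NL}. \<Union>p\<in>Pairs r \<theta>0 (Suc k). Ev k p)"
  have Ev_s: "Ev k p \<in> sets P" for k p unfolding Ev_def by (rule Ev_sets)
  have U_s: "U \<in> sets P" unfolding U_def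
    using Ev_s Pairs_finite[OF r] by (intro sets.finite_UN) auto
  have sub: "AE w in P. w \<in> E \<longrightarrow> w \<in> U"
    using AE_all_good AE_space
  proof eventually_elim
    case (elim w)
    show ?case
    proof (rule ccontr)
      assume "\<not> (w \<in> E \<longrightarrow> w \<in> U)"
      then have wE: "w \<in> E" and wU: "w \<notin> U" by auto
      have pairs: "\<forall>k<NL. \<forall>p\<in>Pairs r \<theta>0 (Suc k). Zp w (fst p) - Zp w (snd p) < tt r x (Suc k)"
        using wU elim unfolding U_def Ev_def by force
      define S where "S = (\<Sum>k<NL. tt r x (Suc k))"
      have each: "Zp w \<theta> \<le> Zp w \<theta>0 + S + 2 * K * eps r NL" if "\<theta> \<in> Bl r" for \<theta>
        using chain_det[OF r th0 elim(2) elim(1) pairs that] unfolding S_def by linarith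
      have sup: "(SUP \<theta>\<in>Bl r. Zp w \<theta>) \<le> Zp w \<theta>0 + S + 2 * K * eps r NL"
        by (rule cSUP_least) (use th0 each in auto)
      have "S = (\<Sum>k<NL. ta r (Suc k)) + (\<Sum>k<NL. tb r x (Suc k))"
        unfolding S_def tt_def by (rule sum.distrib)
      then have "S \<le> 72 * K * r * sqrt (Dn / real n) + 3 * x / 4"
        using ta_sum[OF r, of NL] tb_sum[OF r, of x NL] x by linarith
      then have "(SUP \<theta>\<in>Bl r. Zp w \<theta>) < A + Zp w \<theta>0 + x" using sup A rem by linarith
      moreover have "(SUP \<theta>\<in>Bl r. Zp w \<theta>) \<ge> A + Zp w \<theta>0 + x" using wE unfolding E_def by auto
      ultimately show False by linarith
    qed
  qed
  have "measure P E \<le> measure P U" by (rule PP.finite_measure_mono_AE[OF sub U_s])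
  also have "\<dots> \<le> (\<Sum>k<NL. measure P (\<Union>p\<in>Pairs r \<theta>0 (Suc k). Ev k p))"
    unfolding U_def using Ev_s Pairs_finite[OF r] by (intro measure_UNION_le sets.finite_UN) auto
  also have "\<dots> \<le> (\<Sum>k<NL. \<Sum>p\<in>Pairs r \<theta>0 (Suc k). measure P (Ev k p))"
    by (intro sum_mono measure_UNION_le Pairs_finite[OF r] Ev_s)
  also have "\<dots> \<le> (\<Sum>k<NL. \<Sum>p\<in>Pairs r \<theta>0 (Suc k). exp (- Lam (Suc k)) * exp (- Qx r x))"
  proof (intro sum_mono)
    fix k p assume "p \<in> Pairs r \<theta>0 (Suc k)"
    then obtain \<theta> where th: "\<theta> \<in> Bl r" and p: "p = (pr r \<theta>0 (Suc k) \<theta>, pr r \<theta>0 k \<theta>)"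
      unfolding Pairs_def by auto
    have "nrm (fst p) (snd p) \<le> del r (Suc k)"
      unfolding p del_def using pr_pair_close[OF r th th0] by simp
    then show "measure P (Ev k p) \<le> exp (- Lam (Suc k)) * exp (- Qx r x)"
      unfolding Ev_def by (rule thr_prob[OF r less_imp_le[OF x]])
  qed
  also have "\<dots> \<le> (\<Sum>k<NL. (1/2) ^ Suc k * exp (- Qx r x))"
    by (intro sum_mono pairs_sum[OF r])
  also have "\<dots> = (\<Sum>k<NL. (1/2::real) ^ Suc k) * exp (- Qx r x)" by (simp add: sum_distrib_right)
  also have "\<dots> \<le> 1 * exp (- Qx r x)" by (intro mult_right_mono geo_half_le) auto
  also have "\<dots> \<le> 36 * exp (- (x\<^sup>2 * real n) / (144 * (2 * K)\<^sup>2 * r\<^sup>2))"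
  proof -
    have "(x\<^sup>2 * real n) / (144 * (2 * K)\<^sup>2 * r\<^sup>2) = (x\<^sup>2 * real n) / (576 * K\<^sup>2 * r\<^sup>2)"
      by (simp add: power2_eq_square)
    also have "\<dots> \<le> (x\<^sup>2 * real n) / (128 * K\<^sup>2 * r\<^sup>2)"
      using K r n_pos x by (intro divide_left_mono mult_right_mono) auto
    also have "\<dots> = Qx r x" unfolding Qx_def by (simp add: mult.commute)
    finally have q: "(x\<^sup>2 * real n) / (144 * (2 * K)\<^sup>2 * r\<^sup>2) \<le> Qx r x" .
    have "exp (- Qx r x) \<le> exp (- ((x\<^sup>2 * real n) / (144 * (2 * K)\<^sup>2 * r\<^sup>2)))"
      using q by (subst exp_le_cancel_iff) linarith
    also have "- ((x\<^sup>2 * real n) / (144 * (2 * K)\<^sup>2 * r\<^sup>2)) = - (x\<^sup>2 * real n) / (144 * (2 * K)\<^sup>2 * r\<^sup>2)"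
      by (rule minus_divide_left)
    finally have "exp (- Qx r x) \<le> exp (- (x\<^sup>2 * real n) / (144 * (2 * K)\<^sup>2 * r\<^sup>2))" .
    moreover have "0 \<le> exp (- (x\<^sup>2 * real n) / (144 * (2 * K)\<^sup>2 * r\<^sup>2))" by simp
    ultimately show ?thesis by linarith
  qed
  finally show ?thesis unfolding E_def A_def .
qed

end


lemma words_finite: "finite (words d p)"
proof -
  have "words d p = {xs. set xs \<subseteq> {..<d} \<and> length xs \<le> p}" unfolding words_def by auto
  then show ?thesis using finite_lists_length_le[of "{..<d}" p] by simp
qed

lemma feat_idx_finite: "finite (feat_idx d p q)"
  unfolding feat_idx_def using words_finite by simp

lemma words_card: "card (words d p) \<le> s_d d p"
proof -
  have "words d p = (\<Union>k\<in>{..p}. {xs. set xs \<subseteq> {..<d} \<and> length xs = k})" unfolding words_def by auto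
  then have "card (words d p) \<le> (\<Sum>k\<in>{..p}. card {xs. set xs \<subseteq> {..<d} \<and> length xs = k})"
    by (simp add: card_UN_le)
  also have "\<dots> = (\<Sum>k\<le>p. d ^ k)" by (simp add: card_lists_length_eq)
  finally show ?thesis unfolding s_d_def .
qed

lemma feat_idx_card: "card (feat_idx d p q) \<le> s_d d p + q"
proof -
  have "card (feat_idx d p q) \<le> card (Inl ` words d p :: (nat list + nat) set) + card (Inr ` {..<q} :: (nat list + nat) set)"
    unfolding feat_idx_def by (rule card_Un_le)
  also have "\<dots> \<le> card (words d p) + q" by (simp add: card_image)
  also have "\<dots> \<le> s_d d p + q" using words_card by simp
  finally show ?thesis .
qed

theorem proposition1:
  fixes M :: "'a measure"
    and X :: "'a \<Rightarrow> real \<Rightarrow> nat \<Rightarrow> real"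
    and z :: "'a \<Rightarrow> nat \<Rightarrow> real"
    and y :: "'a \<Rightarrow> real"
    and x0 :: "nat \<Rightarrow> real"
    and T CX Cz r x :: real
    and d q p n :: nat
    and \<theta>0 :: "nat list + nat \<Rightarrow> real"
  assumes "prob_space M"
    and "T > 0" and "d \<ge> 2" and "q \<ge> 1" and "n \<ge> 1"
    and "\<And>t j. (\<lambda>\<omega>. X \<omega> t j) \<in> borel_measurable M"
    and "\<And>j. (\<lambda>\<omega>. z \<omega> j) \<in> borel_measurable M"
    and "y \<in> borel_measurable M"
    and "\<And>\<omega>. \<omega> \<in> space M \<Longrightarrow> y \<omega> \<in> {0, 1}"
    and "\<And>\<omega> j. \<omega> \<in> space M \<Longrightarrow> j < d - 1 \<Longrightarrow> continuous_on {0..T} (\<lambda>t. X \<omega> t j)"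
    and "\<And>\<omega>. \<omega> \<in> space M \<Longrightarrow> bounded_variation (d - 1) (X \<omega>) T"
    and "\<And>\<omega> j. \<omega> \<in> space M \<Longrightarrow> j < d - 1 \<Longrightarrow> X \<omega> 0 j = x0 j"
    and "AE \<omega> in M. total_variation (d - 1) (X \<omega>) T < CX"
    and "AE \<omega> in M. euclid_norm q (z \<omega>) < Cz"
    and "r > 0" and "x > 0"
    and "\<theta>0 \<in> l1_ball d p q r"
  shows "measure (PiM {..<n} (\<lambda>_. M))
           {w \<in> space (PiM {..<n} (\<lambda>_. M)).
              (SUP \<theta>\<in>l1_ball d p q r. Z_proc M d p q T X z y n w \<theta>)
                \<ge> 108 * (2 * (Cz + exp (CX + T))) * r * sqrt (real (s_d d p + q) / real n) * sqrt pi
                  + Z_proc M d p q T X z y n w \<theta>0 + x}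
         \<le> 36 * exp (- (x\<^sup>2 * real n) / (144 * (2 * (Cz + exp (CX + T)))\<^sup>2 * r\<^sup>2))"
proof -
  note A = assms
  interpret PM: prob_space M by (rule A(1))
  define F where "F = feat_idx d p q"
  define \<phi> where "\<phi> \<omega> v = feature d T (X \<omega>) (z \<omega>) v" for \<omega> v
  define K where "K = Cz + exp (CX + T)"
  have T0: "0 \<le> T" using A(2) by simp
  have Cz: "0 \<le> Cz"
  proof (rule ccontr)
    assume "\<not> 0 \<le> Cz"
    then have nz: "\<not> 0 \<le> Cz" .
    have "AE \<omega> in M. False" using A(14)
    proof (rule eventually_mono)
      fix \<omega> assume "euclid_norm q (z \<omega>) < Cz"
      then show False using euclid_norm_nonneg[of q "z \<omega>"] nz by linarith
    qed
    then show False using PM.AE_False by simp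
  qed
  have K: "K > 0" unfolding K_def using Cz by (simp add: add_nonneg_pos)
  have Fin: "Inr 0 \<in> F" using A(4) unfolding F_def feat_idx_def by auto
  have sigm: "(\<lambda>\<omega>. sig_term (time_aug d (X \<omega>)) T I) \<in> borel_measurable M" if I: "set I \<subseteq> {..<d}" for I
    unfolding sig_term_def
  proof (rule sig_measurable[where d=d and W="\<lambda>\<omega> s. total_variation (d - 1) (X \<omega>) s + s"])
    show "0 \<le> T" by (rule T0)
    show "\<And>\<omega> j. \<omega> \<in> space M \<Longrightarrow> j < d \<Longrightarrow> continuous_on {0..T} (\<lambda>t. time_aug d (X \<omega>) t j)"
      by (rule time_aug_cont) (use A(10) in auto)
    show "\<And>\<omega> j. \<omega> \<in> space M \<Longrightarrow> j < d \<Longrightarrow> domin (\<lambda>t. time_aug d (X \<omega>) t j) (\<lambda>s. total_variation (d - 1) (X \<omega>) s + s) 0 T"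
      by (rule time_aug_domin) (use A(11) in auto)
    show "\<And>t j. j < d \<Longrightarrow> (\<lambda>\<omega>. time_aug d (X \<omega>) t j) \<in> borel_measurable M"
      unfolding time_aug_def using A(6) by auto
    show "set (rev I) \<subseteq> {..<d}" using I by simp
    show "T \<in> {0..T}" using T0 by simp
  qed
  interpret C: chain M F \<phi> y K n
  proof unfold_locales
    show "finite F" unfolding F_def by (rule feat_idx_finite)
    show "F \<noteq> {}" using Fin by auto
    show "(\<lambda>\<omega>. \<phi> \<omega> v) \<in> borel_measurable M" if "v \<in> F" for v
    proof (cases v)
      case (Inl I)
      then have "set I \<subseteq> {..<d}" using that unfolding F_def feat_idx_def words_def by auto
      then show ?thesis using sigm Inl unfolding \<phi>_def feature_def by simp
    next
      case (Inr j)
      then show ?thesis using A(7) unfolding \<phi>_def feature_def by simp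
    qed
    show "y \<in> borel_measurable M" by (rule A(8))
    show "\<And>\<omega>. \<omega> \<in> space M \<Longrightarrow> y \<omega> \<in> {0, 1}" by (rule A(9))
    show "K > 0" by (rule K)
    show "n \<ge> 1" by (rule A(5))
    show "AE \<omega> in M. \<forall>v\<in>F. \<bar>\<phi> \<omega> v\<bar> \<le> K"
      using A(13) A(14) AE_space
    proof eventually_elim
      case (elim \<omega>)
      show ?case
      proof
        fix v assume v: "v \<in> F"
        show "\<bar>\<phi> \<omega> v\<bar> \<le> K"
        proof (cases v)
          case (Inl I)
          then have I: "set I \<subseteq> {..<d}" using v unfolding F_def feat_idx_def words_def by auto
          have "\<bar>sig_term (time_aug d (X \<omega>)) T I\<bar> \<le> exp (CX + T)"
            by (rule sig_term_bound[OF A(11)[OF elim(3)] T0 _ I elim(1)]) (use A(10) elim(3) in auto)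
          then show ?thesis using Inl Cz unfolding \<phi>_def feature_def K_def by simp
        next
          case (Inr j)
          then have j: "j < q" using v unfolding F_def feat_idx_def by auto
          have "\<bar>z \<omega> j\<bar> \<le> euclid_norm q (z \<omega>)" by (rule comp_le_norm[OF j])
          moreover have "0 < exp (CX + T)" by simp
          ultimately have "\<bar>z \<omega> j\<bar> \<le> Cz + exp (CX + T)" using elim(2) by linarith
          then show ?thesis using Inr unfolding \<phi>_def feature_def K_def by simp
        qed
      qed
    qed
  qed
  have Zeq: "Z_proc M d p q T X z y n w \<theta> = C.Zp w \<theta>" for w \<theta>
    unfolding C.Zp_def C.Rk_def C.L_def C.eta_def
    unfolding Z_proc_def emp_risk_def risk_def lin_pred_def \<phi>_def F_def
    by simp
  have Beq: "l1_ball d p q r = C.Bl r"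
    unfolding C.Bl_def unfolding l1_ball_def l1_norm_def F_def by simp
  have Dp: "C.Dn \<le> real (s_d d p + q)"
    unfolding C.Dn_def unfolding F_def using feat_idx_card[of d p q] by linarith
  have "measure C.P {w \<in> space C.P. (SUP \<theta>\<in>C.Bl r. C.Zp w \<theta>) \<ge> 108 * (2 * K) * r * sqrt (real (s_d d p + q) / real n) * sqrt pi + C.Zp w \<theta>0 + x}
         \<le> 36 * exp (- (x\<^sup>2 * real n) / (144 * (2 * K)\<^sup>2 * r\<^sup>2))"
    by (rule C.chain_main[OF A(15) A(16) _ Dp]) (use A(17) Beq in simp)
  then show ?thesis unfolding Zeq Beq K_def .
qed


end
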